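(* Under the setting described in the context (conditions (V), (S), (C), compactly supported initial measure $\mu_0$, lattice approximate solution $\mu^N_t$ on $[0,T]$), there is a constant $C_d$, independent of $N$ and of $t\in[0,T]$, such that for all $s,t\in[0,T]$ $$\|\mu^N_t-\mu^N_s\|_{BL^*}\le C_d|t-s|,$$ and moreover, for all $t\in[0,T]$ and all $l$, $$\|V[\mu^N_t]\|_{BL^*}=\|\mu^N_t\|_{BL^*}\le C_d,\qquad \sum_{i=1}^I\sum_{j=1}^J m^v_{ij}(V[\mu^N_{t_l}])\,(1+|v_j|+|v_j|^2)\le C_d.$$
   Context: $\mathcal{M}^+(\mathbb{R}^k)$: finite nonnegative Borel measures; $\|f\|_{BL}=\max(\sup|f|,\operatorname{Lip}f)$, $\|\mu\|_{BL^*}=\sup\{\int\psi\,d\mu:\|\psi\|_{BL}\le1\}$. Conditions: (V) $V:\mathcal{M}^+(\mathbb{R}^d)\to\mathcal{M}^+(\mathbb{R}^d\times\mathbb{R}^d)$, $\pi_1^{\#}V[\mu]=\mu$; (V1) $\sup_{(x,v)\in\operatorname{supp}V[\mu]}|v|\le C_S(1+\sup_{(x,v)\in\operatorname{supp}V[\mu]}|x|)$; (V2) for each $R'>0$, $\|V[\mu]-V[\nu]\|_{BL^*}\le C_F(R')\|\mu-\nu\|_{BL^*}$ for $\mu,\nu$ supported in $B(0,R')$. (S) $s:\mathcal{M}^+(\mathbb{R}^d)\to\mathcal{M}^+(\mathbb{R}^d)$, (S1) $\|s[\mu]-s[\nu]\|_{BL^*}\le L\|\mu-\nu\|_{BL^*}$,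 (S2) $\operatorname{supp}s[\mu]\subseteq B(0,R)$ for all $\mu$. (C) $c:\mathbb{R}^d\times\mathcal{M}^+(\mathbb{R}^d)\to\mathbb{R}$, (C1) $|c|\le C_b$, (C2) $|c(x,\mu)-c(y,\nu)|\le C_L(|x-y|+\|\mu-\nu\|_{BL^*})$. Lattice scheme: fix $T>0$; $\Delta_N=1/N$; $x_1,\dots,x_I$ enumerate $(N^{-2}\mathbb{Z}^d)\cap[-N,N]^d$, $v_1,\dots,v_J$ enumerate $(N^{-1}\mathbb{Z}^d)\cap[-N,N]^d$; $Q_i=x_i+[0,\Delta_N^2)^d$, $Q'_j=v_j+[0,\Delta_N)^d$; $m_i^x(\mu)=\mu(Q_i)$, $m_{ij}^v(W)=W(Q_i\times Q'_j)$. Time points $t_l=l/N$, $l=0,\dots,M$, with the intervals $[t_l,t_{l+1})$ ($l<M$) and $[t_M,T]$ covering $[0,T]$, each of length at most $\Delta_N$. Set $\mu^N_0=\sum_i m_i^x(\mu_0)\delta_{x_i}$ and for $\tau\in[0,\Delta_N]$: $\mu^N_{t_l+\tau}=\tau\sum_i m_i^x(s[\mu^N_{t_l}])\delta_{x_i}+\sum_{i,j}m_{ij}^v(V[\mu^N_{t_l}])e^{c(x_i,\mu^N_{t_l})\tau}\delta_{x_i+\tau v_j}$. *)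

theory Defs
  imports "HOL-Analysis.Analysis"
begin

definition fbm :: "'a::topological_space measure \<Rightarrow> bool" where
  "fbm \<mu> \<longleftrightarrow> sets \<mu> = sets borel \<and> finite_measure \<mu>"

definition msupp :: "'a::metric_space measure \<Rightarrow> 'a set" where
  "msupp \<mu> = {x. \<forall>e>0. emeasure \<mu> (ball x e) \<noteq> 0}"

definition BL1 :: "('a::metric_space \<Rightarrow> real) set" where
  "BL1 = {\<psi>. (\<forall>x. \<bar>\<psi> x\<bar> \<le> 1) \<and> 1-lipschitz_on UNIV \<psi>}"

definition bl_dist :: "'a::metric_space measure \<Rightarrow> 'a measure \<Rightarrow> real" where
  "bl_dist \<mu> \<nu> = (SUP \<psi>\<in>BL1. integral\<^sup>L \<mu> \<psi> - integral\<^sup>L \<nu> \<psi>)"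

definition bl_norm :: "'a::metric_space measure \<Rightarrow> real" where
  "bl_norm \<mu> = (SUP \<psi>\<in>BL1. integral\<^sup>L \<mu> \<psi>)"

definition lat_x :: "nat \<Rightarrow> 'a::euclidean_space set" where
  "lat_x N = {x. \<forall>b\<in>Basis. (\<exists>k::int. x \<bullet> b = real_of_int k / (real N)^2) \<and> \<bar>x \<bullet> b\<bar> \<le> real N}"

definition lat_v :: "nat \<Rightarrow> 'a::euclidean_space set" where
  "lat_v N = {v. \<forall>b\<in>Basis. (\<exists>k::int. v \<bullet> b = real_of_int k / real N) \<and> \<bar>v \<bullet> b\<bar> \<le> real N}"

definition cellQ :: "nat \<Rightarrow> 'a::euclidean_space \<Rightarrow> 'a set" where
  "cellQ N x = {y. \<forall>b\<in>Basis. x \<bullet> b \<le> y \<bullet> b \<and> y \<bullet> b < x \<bullet> b + 1 / (real N)^2}"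

definition cellQ' :: "nat \<Rightarrow> 'a::euclidean_space \<Rightarrow> 'a set" where
  "cellQ' N v = {w. \<forall>b\<in>Basis. v \<bullet> b \<le> w \<bullet> b \<and> w \<bullet> b < v \<bullet> b + 1 / real N}"

definition mx :: "nat \<Rightarrow> 'a::euclidean_space measure \<Rightarrow> 'a \<Rightarrow> real" where
  "mx N \<mu> x = measure \<mu> (cellQ N x)"

definition mv :: "nat \<Rightarrow> ('a::euclidean_space \<times> 'a) measure \<Rightarrow> 'a \<Rightarrow> 'a \<Rightarrow> real" where
  "mv N W x v = measure W (cellQ N x \<times> cellQ' N v)"

definition lat_init :: "nat \<Rightarrow> 'a::euclidean_space measure \<Rightarrow> 'a measure" where
  "lat_init N \<mu>0 = measure_of UNIV (sets borel)
     (\<lambda>A. \<Sum>x\<in>lat_x N. ennreal (mx N \<mu>0 x) * indicator A x)"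

text \<open>One step: mu^N_{t_l + tau} as a function of mu = mu^N_{t_l} and tau.\<close>
definition lat_step :: "nat \<Rightarrow> ('a::euclidean_space measure \<Rightarrow> 'a measure)
    \<Rightarrow> ('a measure \<Rightarrow> ('a \<times> 'a) measure) \<Rightarrow> ('a \<Rightarrow> 'a measure \<Rightarrow> real)
    \<Rightarrow> 'a measure \<Rightarrow> real \<Rightarrow> 'a measure" where
  "lat_step N s V c \<mu> \<tau> = measure_of UNIV (sets borel)
     (\<lambda>A. (\<Sum>x\<in>lat_x N. ennreal (\<tau> * mx N (s \<mu>) x) * indicator A x)
        + (\<Sum>(x,v)\<in>lat_x N \<times> lat_v N.
             ennreal (mv N (V \<mu>) x v * exp (c x \<mu> * \<tau>)) * indicator A (x + \<tau> *\<^sub>R v)))"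

primrec lat_grid :: "nat \<Rightarrow> ('a::euclidean_space measure \<Rightarrow> 'a measure)
    \<Rightarrow> ('a measure \<Rightarrow> ('a \<times> 'a) measure) \<Rightarrow> ('a \<Rightarrow> 'a measure \<Rightarrow> real)
    \<Rightarrow> 'a measure \<Rightarrow> nat \<Rightarrow> 'a measure" where
  "lat_grid N s V c \<mu>0 0 = lat_init N \<mu>0"
| "lat_grid N s V c \<mu>0 (Suc l) = lat_step N s V c (lat_grid N s V c \<mu>0 l) (1 / real N)"

text \<open>mu^N_t: for t in (t_l, t_{l+1}] use the step from t_l with tau = t - t_l.\<close>
definition lat_sol :: "nat \<Rightarrow> ('a::euclidean_space measure \<Rightarrow> 'a measure)
    \<Rightarrow> ('a measure \<Rightarrow> ('a \<times> 'a) measure) \<Rightarrow> ('a \<Rightarrow> 'a measure \<Rightarrow> real)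
    \<Rightarrow> 'a measure \<Rightarrow> real \<Rightarrow> 'a measure" where
  "lat_sol N s V c \<mu>0 t =
     (if t \<le> 0 then lat_init N \<mu>0
      else (let l = nat (\<lceil>t * real N\<rceil> - 1)
            in lat_step N s V c (lat_grid N s V c \<mu>0 l) (t - real l / real N)))"

end

theory Submission
  imports Defs
begin
definition dmeas :: "'k set \<Rightarrow> ('k \<Rightarrow> real) \<Rightarrow> ('k \<Rightarrow> 'b::metric_space) \<Rightarrow> 'b measure" where
  "dmeas K w p = measure_of UNIV (sets borel) (\<lambda>A. \<Sum>k\<in>K. ennreal (w k) * indicator A (p k))"

lemma dmeas_sets[simp]: "sets (dmeas K w p) = sets borel"
  unfolding dmeas_def by (metis sets.sets_measure_of_eq space_borel)

lemma dmeas_space[simp]: "space (dmeas K w p) = UNIV"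
  unfolding dmeas_def by simp

lemma dmeas_emeasure:
  assumes "finite K" "A \<in> sets borel"
  shows "emeasure (dmeas K w p) A = (\<Sum>k\<in>K. ennreal (w k) * indicator A (p k))"
proof -
  show ?thesis unfolding dmeas_def
  proof (rule emeasure_measure_of_sigma)
    show "sigma_algebra UNIV (sets borel)"
      by (metis sets.sigma_algebra_axioms space_borel)
    show "positive (sets borel) (\<lambda>A. \<Sum>k\<in>K. ennreal (w k) * indicator A (p k))"
      by (simp add: positive_def)
    show "countably_additive (sets borel) (\<lambda>A. \<Sum>k\<in>K. ennreal (w k) * indicator A (p k))"
      unfolding countably_additive_def
    proof (intro allI impI)
      fix F :: "nat \<Rightarrow> 'b set" assume "range F \<subseteq> sets borel" "disjoint_family F" "\<Union> (range F) \<in> sets borel"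
      have "(\<Sum>i. \<Sum>k\<in>K. ennreal (w k) * indicator (F i) (p k)) =
            (\<Sum>k\<in>K. \<Sum>i. ennreal (w k) * indicator (F i) (p k))"
        by (rule suminf_sum) auto
      also have "\<dots> = (\<Sum>k\<in>K. ennreal (w k) * indicator (\<Union> (range F)) (p k))"
        using suminf_indicator[OF \<open>disjoint_family F\<close>] by simp
      finally show "(\<Sum>i. \<Sum>k\<in>K. ennreal (w k) * indicator (F i) (p k)) =
            (\<Sum>k\<in>K. ennreal (w k) * indicator (\<Union> (range F)) (p k))" .
    qed
  qed (use assms in auto)
qed

lemma dmeas_finite_measure:
  assumes "finite K" shows "finite_measure (dmeas K w p)"
proof (rule finite_measureI)
  show "emeasure (dmeas K w p) (space (dmeas K w p)) \<noteq> \<infinity>"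
    using assms by (simp add: dmeas_emeasure ennreal_mult_eq_top_iff)
qed

lemma dmeas_fbm: "finite K \<Longrightarrow> fbm (dmeas K w p)"
  unfolding fbm_def using dmeas_finite_measure by auto

lemma dmeas_measure:
  assumes "finite K" "\<And>k. k \<in> K \<Longrightarrow> w k \<ge> 0" "A \<in> sets borel"
  shows "measure (dmeas K w p) A = (\<Sum>k\<in>K. w k * indicator A (p k))"
proof -
  have "emeasure (dmeas K w p) A = ennreal (\<Sum>k\<in>K. w k * indicator A (p k))"
  proof -
    have "emeasure (dmeas K w p) A = (\<Sum>k\<in>K. ennreal (w k * indicator A (p k)))"
      using assms by (simp add: dmeas_emeasure ennreal_mult' ennreal_indicator)
    also have "\<dots> = ennreal (\<Sum>k\<in>K. w k * indicator A (p k))"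
      using assms by (intro sum_ennreal) auto
    finally show ?thesis .
  qed
  moreover have "0 \<le> (\<Sum>k\<in>K. w k * indicator A (p k))"
    using assms by (intro sum_nonneg) auto
  ultimately show ?thesis unfolding measure_def by (simp only: enn2real_ennreal)
qed

lemma dmeas_AE:
  assumes "finite K"
  shows "AE x in dmeas K w p. x \<in> p ` K"
proof (rule AE_I')
  have op: "open (UNIV - p ` K)" using assms by (intro open_Diff finite_imp_closed) auto
  have "emeasure (dmeas K w p) (UNIV - p ` K) = 0"
    using assms op by (subst dmeas_emeasure) (auto intro!: sum.neutral)
  then show "UNIV - p ` K \<in> null_sets (dmeas K w p)"
  proof -
    have "open (UNIV - p ` K)" using assms by (intro open_Diff finite_imp_closed) auto
    then show ?thesis using \<open>emeasure (dmeas K w p) (UNIV - p ` K) = 0\<close> by (auto simp: null_sets_def)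
  qed
qed auto

lemma dmeas_integral:
  assumes K: "finite K" and w: "\<And>k. k \<in> K \<Longrightarrow> w k \<ge> 0"
    and f: "f \<in> borel_measurable borel"
  shows "integral\<^sup>L (dmeas K w p) f = (\<Sum>k\<in>K. w k * f (p k))"
proof -
  let ?M = "dmeas K w p"
  interpret finite_measure ?M using dmeas_finite_measure[OF K] .
  have "integral\<^sup>L ?M f = integral\<^sup>L ?M (\<lambda>x. \<Sum>y\<in>p`K. f y * indicator {y} x)"
  proof (rule integral_cong_AE)
    show "f \<in> borel_measurable ?M" using f by (subst measurable_cong_sets[OF dmeas_sets refl])
    show "(\<lambda>x. \<Sum>y\<in>p`K. f y * indicator {y} x) \<in> borel_measurable ?M"
      by (intro borel_measurable_sum borel_measurable_times borel_measurable_const borel_measurable_indicator)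
        (simp add: borel_closed)
    show "AE x in ?M. f x = (\<Sum>y\<in>p`K. f y * indicator {y} x)"
      using dmeas_AE[OF K, where w=w and p=p]
    proof eventually_elim
      case (elim x)
      then show ?case using K
        by (simp add: indicator_def sum.delta[OF finite_imageI[OF K]])
    qed
  qed
  also have "\<dots> = (\<Sum>y\<in>p`K. f y * measure ?M {y})"
  proof -
    have ind: "{y} \<in> sets ?M" for y by (simp add: borel_closed)
    have "integral\<^sup>L ?M (\<lambda>x. \<Sum>y\<in>p`K. f y * indicator {y} x) =
      (\<Sum>y\<in>p`K. integral\<^sup>L ?M (\<lambda>x. f y * indicator {y} x))"
      by (rule Bochner_Integration.integral_sum) (auto intro!: integrable_mult_right integrable_real_indicator ind simp: less_top[symmetric])
    then show ?thesis using ind by simp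
  qed
  also have "\<dots> = (\<Sum>y\<in>p`K. f y * (\<Sum>k\<in>K. w k * indicator {y} (p k)))"
    using K w by (simp add: dmeas_measure)
  also have "\<dots> = (\<Sum>k\<in>K. \<Sum>y\<in>p`K. w k * (f y * indicator {y} (p k)))"
    by (simp add: sum_distrib_left sum.swap[of _ "p`K"] algebra_simps)
  also have "\<dots> = (\<Sum>k\<in>K. w k * f (p k))"
  proof (rule sum.cong[OF refl])
    fix k assume "k \<in> K"
    then show "(\<Sum>y\<in>p`K. w k * (f y * indicator {y} (p k))) = w k * f (p k)"
    proof -
      have "(\<Sum>y\<in>p`K. w k * (f y * indicator {y} (p k))) = (\<Sum>y\<in>p`K. if p k = y then w k * f y else 0)"
        by (intro sum.cong) (auto simp: indicator_def)
      then show ?thesis using K \<open>k \<in> K\<close> by simp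
    qed
  qed
  finally show ?thesis .
qed

lemma dmeas_msupp:
  assumes K: "finite K"
  shows "msupp (dmeas K w p) \<subseteq> p ` {k\<in>K. w k > 0}"
proof
  fix x assume x: "x \<in> msupp (dmeas K w p)"
  show "x \<in> p ` {k\<in>K. w k > 0}"
  proof (rule ccontr)
    assume nx: "x \<notin> p ` {k\<in>K. w k > 0}"
    let ?P = "p ` {k\<in>K. w k > 0}"
    have fin: "finite ?P" using K by simp
    obtain e where e: "e > 0" "\<And>y. y \<in> ?P \<Longrightarrow> e \<le> dist x y"
    proof (cases "?P = {}")
      case True then show ?thesis using that[of 1] by auto
    next
      case False
      show ?thesis
        apply (rule that[of "Min ((dist x) ` ?P)"])
        using fin False nx by (auto simp: Min_gr_iff)
    qed
    have "emeasure (dmeas K w p) (ball x e) = 0"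
    proof (subst dmeas_emeasure[OF K], simp, intro sum.neutral ballI)
      fix k assume k: "k \<in> K"
      show "ennreal (w k) * indicator (ball x e) (p k) = 0"
      proof (cases "w k > 0")
        case True
        then have "e \<le> dist x (p k)" using e(2)[of "p k"] k by auto
        then show ?thesis by (simp add: indicator_def)
      qed (simp add: ennreal_eq_0_iff)
    qed
    with x e show False unfolding msupp_def by auto
  qed
qed

lemma BL1_D: "\<psi> \<in> BL1 \<Longrightarrow> \<bar>\<psi> x\<bar> \<le> 1"
  unfolding BL1_def by auto

lemma BL1_lip: "\<psi> \<in> BL1 \<Longrightarrow> \<bar>\<psi> x - \<psi> y\<bar> \<le> dist x y"
  unfolding BL1_def using lipschitz_onD[of 1 UNIV \<psi> x y] by (auto simp: dist_real_def)

lemma BL1_meas: "\<psi> \<in> BL1 \<Longrightarrow> \<psi> \<in> borel_measurable borel"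
  unfolding BL1_def by (auto intro!: borel_measurable_continuous_onI lipschitz_on_continuous_on)

lemma BL1_const1: "(\<lambda>_. 1) \<in> BL1"
  unfolding BL1_def by (auto intro!: lipschitz_onI)

lemma BL1_ne: "BL1 \<noteq> {}"
  using BL1_const1 by auto

lemma fbm_space: "fbm M \<Longrightarrow> space M = UNIV"
  unfolding fbm_def by (metis sets_eq_imp_space_eq space_borel)

lemma fbm_meas: "fbm M \<Longrightarrow> \<psi> \<in> BL1 \<Longrightarrow> \<psi> \<in> borel_measurable M"
  unfolding fbm_def using BL1_meas by (metis measurable_cong_sets)

lemma fbm_integrable: "fbm M \<Longrightarrow> \<psi> \<in> BL1 \<Longrightarrow> integrable M \<psi>"
  using fbm_meas[of M \<psi>] BL1_D[of \<psi>] unfolding fbm_def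
  by (intro finite_measure.integrable_const_bound[where B=1]) auto

lemma fbm_int_abs: assumes "fbm M" "\<psi> \<in> BL1" shows "\<bar>integral\<^sup>L M \<psi>\<bar> \<le> measure M UNIV"
proof -
  interpret finite_measure M using assms unfolding fbm_def by auto
  have "\<bar>integral\<^sup>L M \<psi>\<bar> \<le> integral\<^sup>L M (\<lambda>x. \<bar>\<psi> x\<bar>)"
    by (rule integral_abs_bound)
  also have "\<dots> \<le> integral\<^sup>L M (\<lambda>x. 1)"
    using assms BL1_D[OF assms(2)] fbm_integrable[OF assms]
    by (intro integral_mono) auto
  also have "\<dots> = measure M UNIV" using fbm_space[OF assms(1)] by simp
  finally show ?thesis .
qed

lemma fbm_int1: "fbm M \<Longrightarrow> integral\<^sup>L M (\<lambda>x. 1) = measure M UNIV"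
  using fbm_space[of M] by simp

lemma bl_norm_eq: assumes "fbm M" shows "bl_norm M = measure M UNIV"
  unfolding bl_norm_def
proof (rule cSup_eq_maximum)
  show "measure M UNIV \<in> (\<lambda>\<psi>. integral\<^sup>L M \<psi>) ` BL1"
    using BL1_const1 fbm_int1[OF assms] by force
  show "x \<le> measure M UNIV" if "x \<in> (\<lambda>\<psi>. integral\<^sup>L M \<psi>) ` BL1" for x
    using that fbm_int_abs[OF assms] by force
qed

lemma bl_dist_le: "(\<And>\<psi>. \<psi> \<in> BL1 \<Longrightarrow> integral\<^sup>L M \<psi> - integral\<^sup>L N \<psi> \<le> K) \<Longrightarrow> bl_dist M N \<le> K"
  unfolding bl_dist_def by (rule cSUP_least[OF BL1_ne])

lemma bl_dist_ge: assumes "fbm M" "fbm N" "\<psi> \<in> BL1"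
  shows "integral\<^sup>L M \<psi> - integral\<^sup>L N \<psi> \<le> bl_dist M N"
  unfolding bl_dist_def
proof (rule cSUP_upper[OF assms(3)])
  show "bdd_above ((\<lambda>\<psi>. integral\<^sup>L M \<psi> - integral\<^sup>L N \<psi>) ` BL1)"
    by (rule bdd_aboveI[where M="measure M UNIV + measure N UNIV"])
      (use fbm_int_abs[OF assms(1)] fbm_int_abs[OF assms(2)] in force)
qed

lemma fbm_null: "fbm (null_measure borel)"
  unfolding fbm_def by (auto intro!: finite_measureI)

lemma bl_dist_null: assumes "fbm M" shows "bl_dist M (null_measure borel) \<le> measure M UNIV"
  by (rule bl_dist_le) (use fbm_int_abs[OF assms] in force)

lemma mass_diff_le: assumes "fbm M" "fbm N"
  shows "measure M UNIV - measure N UNIV \<le> bl_dist M N"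
  using bl_dist_ge[OF assms BL1_const1] fbm_int1[OF assms(1)] fbm_int1[OF assms(2)] by simp

lemma supp_null:
  fixes M :: "'b::{metric_space,second_countable_topology} measure"
  assumes sM: "sets M = sets borel" and A: "A \<in> sets borel" and dis: "A \<inter> msupp M = {}"
  shows "emeasure M A = 0"
proof -
  define F where "F = {ball x e |x e. e > 0 \<and> emeasure M (ball x e) = 0}"
  have "\<And>S. S \<in> F \<Longrightarrow> open S" unfolding F_def by auto
  then obtain F' where F': "F' \<subseteq> F" "countable F'" "\<Union>F' = \<Union>F" by (rule Lindelof)
  have nul: "(\<Union>S\<in>F'. S) \<in> null_sets M"
  proof (rule null_sets_UN'[OF F'(2)])
    fix S assume "S \<in> F'"
    then have "S \<in> F" using F' by auto
    then show "S \<in> null_sets M" unfolding F_def using sM by auto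
  qed
  have AF: "A \<subseteq> \<Union>F"
  proof
    fix x assume "x \<in> A"
    then have "x \<notin> msupp M" using dis by auto
    then obtain e where "e > 0" "emeasure M (ball x e) = 0" unfolding msupp_def by auto
    then show "x \<in> \<Union>F" unfolding F_def by force
  qed
  then have sub: "A \<subseteq> (\<Union>S\<in>F'. S)" using F'(3) by auto
  have "A \<in> null_sets M" by (rule null_sets_subset[OF nul _ sub]) (use A sM in simp)
  then show ?thesis by auto
qed

lemma marg_emeasure:
  fixes W :: "('b::metric_space \<times> 'c::metric_space) measure"
  assumes sW: "sets W = sets borel" and D: "distr W borel fst = \<mu>" and A: "A \<in> sets borel"
  shows "emeasure \<mu> A = emeasure W (A \<times> UNIV)"
proof -
  have m: "fst \<in> measurable W borel"
    using borel_measurable_continuous_onI[OF continuous_on_fst[OF continuous_on_id]]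
    by (subst measurable_cong_sets[OF sW refl]) simp
  have "space W = UNIV" using sW by (metis sets_eq_imp_space_eq space_borel)
  then show ?thesis using emeasure_distr[OF m A] D by (simp add: vimage_fst)
qed

lemma marg_msupp:
  fixes W :: "('b::metric_space \<times> 'c::metric_space) measure"
  assumes sW: "sets W = sets borel" and D: "distr W borel fst = \<mu>" and p: "p \<in> msupp W"
  shows "fst p \<in> msupp \<mu>"
  unfolding msupp_def
proof (intro CollectI allI impI)
  fix e :: real assume e: "e > 0"
  have "emeasure W (ball p e) \<noteq> 0" using p e unfolding msupp_def by auto
  moreover have "emeasure W (ball p e) \<le> emeasure W (ball (fst p) e \<times> UNIV)"
  proof (rule emeasure_mono)
    show "ball p e \<subseteq> ball (fst p) e \<times> UNIV"
      using dist_fst_le[of p] by (auto simp: subset_eq mem_ball) (metis dist_fst_le le_less_trans fst_conv)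
    show "ball (fst p) e \<times> UNIV \<in> sets W" using sW by (auto intro!: borel_open open_Times)
  qed
  ultimately show "emeasure \<mu> (ball (fst p) e) \<noteq> 0"
    using marg_emeasure[OF sW D, of "ball (fst p) e"] by auto
qed

definition G2 :: "nat \<Rightarrow> 'a::euclidean_space set" where
  "G2 N = {x. \<forall>b\<in>Basis. \<exists>k::int. x \<bullet> b = real_of_int k / (real N)^2}"

definition G1 :: "nat \<Rightarrow> 'a::euclidean_space set" where
  "G1 N = {x. \<forall>b\<in>Basis. \<exists>k::int. x \<bullet> b = real_of_int k / real N}"

lemma lat_x_G2: "lat_x N \<subseteq> G2 N"
  unfolding lat_x_def G2_def by auto

lemma lat_v_G1: "lat_v N \<subseteq> G1 N"
  unfolding lat_v_def G1_def by auto

lemma int_grid_eq: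
  fixes h :: real
  assumes h: "h > 0" and "a = real_of_int k / h" "a' = real_of_int k' / h" "\<bar>a - a'\<bar> < 1 / h"
  shows "a = a'"
proof -
  have "\<bar>real_of_int k - real_of_int k'\<bar> / h < 1 / h"
    using assms by (simp add: diff_divide_distrib[symmetric] abs_divide)
  then have "\<bar>real_of_int (k - k')\<bar> < 1" using h by (simp add: divide_less_cancel)
  then have "k = k'" by linarith
  then show ?thesis using assms by simp
qed

lemma cellQ_disj:
  assumes N: "N \<ge> 1" and x: "x \<in> G2 N" and x': "x' \<in> G2 N" and ne: "x \<noteq> x'"
  shows "cellQ N x \<inter> cellQ N x' = {}"
proof (rule ccontr)
  assume "cellQ N x \<inter> cellQ N x' \<noteq> {}"
  then obtain y where y: "y \<in> cellQ N x" "y \<in> cellQ N x'" by auto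
  have "x \<bullet> b = x' \<bullet> b" if b: "b \<in> Basis" for b
  proof -
    obtain k k' :: int where k: "x \<bullet> b = k / (real N)^2" "x' \<bullet> b = k' / (real N)^2"
      using x x' b unfolding G2_def by blast
    have "\<bar>x \<bullet> b - x' \<bullet> b\<bar> < 1 / (real N)^2"
      using y b unfolding cellQ_def by force
    then show ?thesis using N by (intro int_grid_eq[OF _ k]) auto
  qed
  then have "x = x'" by (simp add: euclidean_eqI[where x=x and y=x'])
  then show False using ne by simp
qed

lemma cellQ'_disj:
  assumes N: "N \<ge> 1" and x: "x \<in> G1 N" and x': "x' \<in> G1 N" and ne: "x \<noteq> x'"
  shows "cellQ' N x \<inter> cellQ' N x' = {}"
proof (rule ccontr)
  assume "cellQ' N x \<inter> cellQ' N x' \<noteq> {}"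
  then obtain y where y: "y \<in> cellQ' N x" "y \<in> cellQ' N x'" by auto
  have "x \<bullet> b = x' \<bullet> b" if b: "b \<in> Basis" for b
  proof -
    obtain k k' :: int where k: "x \<bullet> b = k / real N" "x' \<bullet> b = k' / real N"
      using x x' b unfolding G1_def by blast
    have "\<bar>x \<bullet> b - x' \<bullet> b\<bar> < 1 / real N"
      using y b unfolding cellQ'_def by force
    then show ?thesis using N by (intro int_grid_eq[OF _ k]) auto
  qed
  then have "x = x'" by (simp add: euclidean_eqI[where x=x and y=x'])
  then show False using ne by simp
qed

lemma G2_cell_eq:
  assumes N: "N \<ge> 1" and x: "x \<in> G2 N" and y: "y \<in> G2 N" and yx: "y \<in> cellQ N x"
  shows "y = x"
proof -
  have "y \<in> cellQ N y" unfolding cellQ_def using N by auto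
  then show ?thesis using cellQ_disj[OF N y x] yx by blast
qed

lemma cellQ_norm:
  fixes x y :: "'a::euclidean_space"
  assumes "y \<in> cellQ N x"
  shows "norm (y - x) \<le> real DIM('a::euclidean_space) / (real N)^2"
proof -
  have "norm (y - x) \<le> (\<Sum>b\<in>Basis. \<bar>(y - x) \<bullet> b\<bar>)" by (rule norm_le_l1)
  also have "\<dots> \<le> (\<Sum>b\<in>(Basis::'a set). 1 / (real N)^2)"
  proof (intro sum_mono)
    fix b :: 'a assume "b \<in> Basis"
    then have "x \<bullet> b \<le> y \<bullet> b" "y \<bullet> b < x \<bullet> b + 1 / (real N)^2" using assms unfolding cellQ_def by auto
    then show "\<bar>(y - x) \<bullet> b\<bar> \<le> 1 / (real N)^2" by (simp add: inner_diff_left)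
  qed
  finally show ?thesis by simp
qed

lemma cellQ'_norm:
  fixes x y :: "'a::euclidean_space"
  assumes "y \<in> cellQ' N x"
  shows "norm (y - x) \<le> real DIM('a::euclidean_space) / real N"
proof -
  have "norm (y - x) \<le> (\<Sum>b\<in>Basis. \<bar>(y - x) \<bullet> b\<bar>)" by (rule norm_le_l1)
  also have "\<dots> \<le> (\<Sum>b\<in>(Basis::'a set). 1 / real N)"
  proof (intro sum_mono)
    fix b :: 'a assume "b \<in> Basis"
    then have "x \<bullet> b \<le> y \<bullet> b" "y \<bullet> b < x \<bullet> b + 1 / real N" using assms unfolding cellQ'_def by auto
    then show "\<bar>(y - x) \<bullet> b\<bar> \<le> 1 / real N" by (simp add: inner_diff_left)
  qed
  finally show ?thesis by simp
qed

lemma cellQ_sets[measurable]: "cellQ N x \<in> sets borel"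
proof -
  have e: "cellQ N x = (\<Inter>b\<in>Basis. {y. y \<bullet> b \<ge> x \<bullet> b} \<inter> {y. y \<bullet> b < x \<bullet> b + 1 / (real N)^2})"
    unfolding cellQ_def by auto
  show ?thesis unfolding e
    by (intro sets.finite_INT) (auto intro!: borel_closed borel_open closed_halfspace_component_ge
        open_halfspace_component_lt sets.Int)
qed

lemma cellQ'_sets[measurable]: "cellQ' N x \<in> sets borel"
proof -
  have e: "cellQ' N x = (\<Inter>b\<in>Basis. {y. y \<bullet> b \<ge> x \<bullet> b} \<inter> {y. y \<bullet> b < x \<bullet> b + 1 / real N})"
    unfolding cellQ'_def by auto
  show ?thesis unfolding e
    by (intro sets.finite_INT) (auto intro!: borel_closed borel_open closed_halfspace_component_ge
        open_halfspace_component_lt sets.Int)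
qed

lemma in_lat_x:
  assumes "y \<in> G2 N" "norm y \<le> real N" shows "y \<in> lat_x N"
  using assms Basis_le_norm[of _ y] unfolding lat_x_def G2_def by (auto intro: order_trans)

lemma cover_v:
  fixes w :: "'a::euclidean_space"
  assumes N: "N \<ge> 1" and w: "norm w < real N"
  shows "\<exists>v\<in>lat_v N. w \<in> cellQ' N v"
proof -
  define fl where "fl = (\<lambda>b. \<lfloor>real N * (w \<bullet> b)\<rfloor>)"
  define v :: 'a where "v = (\<Sum>b\<in>Basis. (real_of_int (fl b) / real N) *\<^sub>R b)"
  have vb: "v \<bullet> b = real_of_int (fl b) / real N" if "b \<in> Basis" for b
    using that unfolding v_def by (simp add: inner_sum_left_Basis)
  have Npos: "real N > 0" using N by simp
  have fl1: "real_of_int (fl b) \<le> real N * (w \<bullet> b)" for b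
    unfolding fl_def by (rule of_int_floor_le)
  have fl2: "real N * (w \<bullet> b) < real_of_int (fl b) + 1" for b
    unfolding fl_def by (rule real_of_int_floor_add_one_gt)
  have "v \<in> lat_v N"
    unfolding lat_v_def
  proof (intro CollectI ballI conjI)
    fix b :: 'a assume b: "b \<in> Basis"
    show "\<exists>k::int. v \<bullet> b = real_of_int k / real N" using vb[OF b] by blast
    have wb: "\<bar>w \<bullet> b\<bar> < real N" using Basis_le_norm[OF b, of w] w by linarith
    have m1: "real N * (w \<bullet> b) < real N * real N"
      using wb Npos by (intro mult_strict_left_mono) (auto simp: abs_less_iff)
    have m2: "real N * (- (w \<bullet> b)) < real N * real N"
      using wb Npos by (intro mult_strict_left_mono) (auto simp: abs_less_iff)
    have i1: "fl b \<le> int N * int N"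
    proof -
      have "real_of_int (fl b) < real_of_int (int N * int N) + 1" using fl1[of b] m1 by simp
      then show ?thesis by linarith
    qed
    have i2: "- (int N * int N) \<le> fl b"
    proof -
      have "real_of_int (- (int N * int N)) < real_of_int (fl b) + 1" using fl2[of b] m2 by simp
      then show ?thesis by linarith
    qed
    have "\<bar>real_of_int (fl b)\<bar> \<le> real N * real N"
    proof -
      have "\<bar>fl b\<bar> \<le> int N * int N" using i1 i2 by (simp add: abs_le_iff)
      then have "real_of_int \<bar>fl b\<bar> \<le> real_of_int (int N * int N)" by (simp only: of_int_le_iff)
      then show ?thesis by simp
    qed
    then have "\<bar>real_of_int (fl b)\<bar> / real N \<le> real N * real N / real N"
      using Npos by (intro divide_right_mono) auto
    then show "\<bar>v \<bullet> b\<bar> \<le> real N" using Npos vb[OF b] by (simp add: abs_divide)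
  qed
  moreover have "w \<in> cellQ' N v"
    unfolding cellQ'_def
  proof (intro CollectI ballI conjI)
    fix b :: 'a assume b: "b \<in> Basis"
    show "v \<bullet> b \<le> w \<bullet> b" using vb[OF b] Npos fl1[of b]
      by (simp add: pos_divide_le_eq mult.commute)
    have "v \<bullet> b + 1 / real N = (real_of_int (fl b) + 1) / real N"
      using vb[OF b] by (simp add: add_divide_distrib)
    moreover have "w \<bullet> b < (real_of_int (fl b) + 1) / real N"
      using Npos fl2[of b] by (simp add: pos_less_divide_eq mult.commute)
    ultimately show "w \<bullet> b < v \<bullet> b + 1 / real N" by simp
  qed
  ultimately show ?thesis by blast
qed

lemma G2_add:
  assumes N: "N \<ge> 1" and x: "x \<in> G2 N" and v: "v \<in> G1 N"
  shows "x + (1 / real N) *\<^sub>R v \<in> G2 N"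
  unfolding G2_def
proof (intro CollectI ballI)
  fix b :: 'a assume b: "b \<in> Basis"
  obtain k k' :: int where k: "x \<bullet> b = k / (real N)^2" "v \<bullet> b = k' / real N"
    using x v b unfolding G2_def G1_def by blast
  have "(x + (1 / real N) *\<^sub>R v) \<bullet> b = real_of_int (k + k') / (real N)^2"
    using k N by (simp add: inner_add_left field_simps power2_eq_square)
  then show "\<exists>k::int. (x + (1 / real N) *\<^sub>R v) \<bullet> b = real_of_int k / (real N)^2" by blast
qed

lemma finite_grid:
  fixes S :: "'a::euclidean_space set" and h :: real
  assumes "h > 0" and "S \<subseteq> {x. \<forall>b\<in>Basis. (\<exists>k::int. x \<bullet> b = real_of_int k * h) \<and> \<bar>x \<bullet> b\<bar> \<le> r}"
  shows "finite S"
proof -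
  define I where "I = (\<lambda>k::int. real_of_int k * h) ` {-\<lceil>r / h\<rceil>..\<lceil>r / h\<rceil>}"
  have fI: "finite I" unfolding I_def by simp
  have "S \<subseteq> (\<lambda>f. \<Sum>b\<in>Basis. f b *\<^sub>R b) ` (PiE Basis (\<lambda>_. I))"
  proof
    fix x assume "x \<in> S"
    then have xs: "\<forall>b\<in>Basis. (\<exists>k::int. x \<bullet> b = real_of_int k * h) \<and> \<bar>x \<bullet> b\<bar> \<le> r" using assms by auto
    have "x \<bullet> b \<in> I" if b: "b \<in> Basis" for b
    proof -
      obtain k :: int where k: "x \<bullet> b = real_of_int k * h" "\<bar>x \<bullet> b\<bar> \<le> r" using xs b by blast
      have "\<bar>real_of_int k\<bar> \<le> r / h" using k assms(1) by (simp add: le_divide_eq abs_mult)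
      then have "k \<in> {-\<lceil>r / h\<rceil>..\<lceil>r / h\<rceil>}" by (auto simp: abs_le_iff) linarith+
      then show ?thesis unfolding I_def using k by blast
    qed
    then have "restrict (\<lambda>b. x \<bullet> b) Basis \<in> PiE Basis (\<lambda>_. I)" by auto
    moreover have "x = (\<Sum>b\<in>Basis. restrict (\<lambda>b. x \<bullet> b) Basis b *\<^sub>R b)"
      by (simp add: euclidean_representation)
    ultimately show "x \<in> (\<lambda>f. \<Sum>b\<in>Basis. f b *\<^sub>R b) ` (PiE Basis (\<lambda>_. I))" by blast
  qed
  moreover have "finite (PiE Basis (\<lambda>_::'a. I))" using fI by (intro finite_PiE) auto
  ultimately show ?thesis by (meson finite_imageI finite_subset)
qed

lemma finite_lat_x: "N \<ge> 1 \<Longrightarrow> finite (lat_x N :: 'a::euclidean_space set)"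
  by (rule finite_grid[where h="1 / (real N)^2" and r="real N"]) (auto simp: lat_x_def)

lemma finite_lat_v: "N \<ge> 1 \<Longrightarrow> finite (lat_v N :: 'a::euclidean_space set)"
  by (rule finite_grid[where h="1 / real N" and r="real N"]) (auto simp: lat_v_def)

definition wst :: "nat \<Rightarrow> ('a::euclidean_space measure \<Rightarrow> 'a measure)
    \<Rightarrow> ('a measure \<Rightarrow> ('a \<times> 'a) measure) \<Rightarrow> ('a \<Rightarrow> 'a measure \<Rightarrow> real)
    \<Rightarrow> 'a measure \<Rightarrow> real \<Rightarrow> ('a + 'a \<times> 'a) \<Rightarrow> real" where
  "wst N s V c \<mu> \<tau> = case_sum (\<lambda>x. \<tau> * mx N (s \<mu>) x) (\<lambda>(x,v). mv N (V \<mu>) x v * exp (c x \<mu> * \<tau>))"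

definition pst :: "real \<Rightarrow> ('a::euclidean_space + 'a \<times> 'a) \<Rightarrow> 'a" where
  "pst \<tau> = case_sum (\<lambda>x. x) (\<lambda>(x,v). x + \<tau> *\<^sub>R v)"

lemma lat_step_dmeas:
  assumes "N \<ge> 1"
  shows "lat_step N s V c \<mu> \<tau> = dmeas (lat_x N <+> lat_x N \<times> lat_v N) (wst N s V c \<mu> \<tau>) (pst \<tau>)"
proof -
  have f: "finite (lat_x N :: 'a set)" "finite (lat_v N :: 'a set)"
    using assms finite_lat_x finite_lat_v by auto
  show ?thesis unfolding lat_step_def dmeas_def
  proof (intro arg_cong[where f="measure_of UNIV (sets borel)"] ext)
    fix A
    show "(\<Sum>x\<in>lat_x N. ennreal (\<tau> * mx N (s \<mu>) x) * indicator A x) +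
        (\<Sum>(x, v)\<in>lat_x N \<times> lat_v N. ennreal (mv N (V \<mu>) x v * exp (c x \<mu> * \<tau>)) * indicator A (x + \<tau> *\<^sub>R v)) =
        (\<Sum>k\<in>lat_x N <+> lat_x N \<times> lat_v N. ennreal (wst N s V c \<mu> \<tau> k) * indicator A (pst \<tau> k))"
      by (subst sum.Plus[OF f(1) finite_cartesian_product[OF f]])
        (simp only: comp_def wst_def pst_def sum.case case_prod_unfold)
  qed
qed

lemma lat_init_dmeas: "lat_init N \<mu>0 = dmeas (lat_x N) (mx N \<mu>0) (\<lambda>x. x)"
  unfolding lat_init_def dmeas_def by simp

lemma mx_nonneg: "mx N M x \<ge> 0" unfolding mx_def by simp
lemma mv_nonneg: "mv N M x v \<ge> 0" unfolding mv_def by simp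

lemma wst_nonneg: "\<tau> \<ge> 0 \<Longrightarrow> wst N s V c \<mu> \<tau> k \<ge> 0"
  unfolding wst_def by (cases k) (auto simp: mx_nonneg mv_nonneg)

lemma dmeas_restrict:
  assumes "finite K"
  shows "dmeas K w p = dmeas {k\<in>K. w k > 0} w p"
  unfolding dmeas_def
proof (intro arg_cong[where f="measure_of UNIV (sets borel)"] ext)
  fix A
  show "(\<Sum>k\<in>K. ennreal (w k) * indicator A (p k)) = (\<Sum>k\<in>{k\<in>K. w k > 0}. ennreal (w k) * indicator A (p k))"
    using assms by (intro sum.mono_neutral_right) (auto simp: ennreal_eq_0_iff)
qed

lemma sum_measure_disj_le:
  assumes M: "fbm M" and I: "finite I" and A: "\<And>i. i \<in> I \<Longrightarrow> A i \<in> sets borel"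
    and d: "disjoint_family_on A I"
  shows "(\<Sum>i\<in>I. measure M (A i)) \<le> measure M UNIV"
proof -
  interpret finite_measure M using M unfolding fbm_def by auto
  have sM: "sets M = sets borel" using M unfolding fbm_def by auto
  have "(\<Sum>i\<in>I. measure M (A i)) = measure M (\<Union>i\<in>I. A i)"
    using I A d sM by (intro measure_finite_Union[symmetric]) auto
  also have "\<dots> \<le> measure M UNIV"
    using bounded_measure[of "\<Union>i\<in>I. A i"] fbm_space[OF M] by simp
  finally show ?thesis .
qed

lemma sum_mx_le:
  assumes "fbm M" "N \<ge> 1"
  shows "(\<Sum>x\<in>lat_x N. mx N M x) \<le> measure M UNIV"
  unfolding mx_def
proof (rule sum_measure_disj_le[OF assms(1)])
  show "disjoint_family_on (cellQ N) (lat_x N)"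
    unfolding disjoint_family_on_def using cellQ_disj[OF assms(2)] lat_x_G2 by blast
qed (use finite_lat_x[OF assms(2)] in auto)

lemma sum_mv_le:
  assumes "fbm M" "N \<ge> 1"
  shows "(\<Sum>(x,v)\<in>lat_x N \<times> lat_v N. mv N M x v) \<le> measure M UNIV"
proof -
  have "(\<Sum>(x,v)\<in>lat_x N \<times> lat_v N. mv N M x v) = (\<Sum>q\<in>lat_x N \<times> lat_v N. measure M (cellQ N (fst q) \<times> cellQ' N (snd q)))"
    unfolding mv_def by (simp add: case_prod_unfold)
  also have "\<dots> \<le> measure M UNIV"
  proof (rule sum_measure_disj_le[OF assms(1)])
    show "disjoint_family_on (\<lambda>q. cellQ N (fst q) \<times> cellQ' N (snd q)) (lat_x N \<times> lat_v N)"
      unfolding disjoint_family_on_def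
    proof (intro ballI impI)
      fix q q' assume q: "q \<in> lat_x N \<times> lat_v N" "q' \<in> lat_x N \<times> lat_v N" "q \<noteq> q'"
      show "(cellQ N (fst q) \<times> cellQ' N (snd q)) \<inter> (cellQ N (fst q') \<times> cellQ' N (snd q')) = {}"
      proof (cases "fst q = fst q'")
        case True
        then have "snd q \<noteq> snd q'" using q(3) by (auto simp: prod_eq_iff)
        moreover have "snd q \<in> G1 N" "snd q' \<in> G1 N" using q lat_v_G1 by (auto simp: mem_Times_iff)
        ultimately have "cellQ' N (snd q) \<inter> cellQ' N (snd q') = {}" using cellQ'_disj[OF assms(2)] by blast
        then show ?thesis by auto
      next
        case False
        moreover have "fst q \<in> G2 N" "fst q' \<in> G2 N" using q lat_x_G2 by (auto simp: mem_Times_iff)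
        ultimately have "cellQ N (fst q) \<inter> cellQ N (fst q') = {}" using cellQ_disj[OF assms(2)] by blast
        then show ?thesis by auto
      qed
    qed
  qed (use finite_lat_x[OF assms(2)] finite_lat_v[OF assms(2)] in \<open>auto intro!: borel_Times\<close>)
  finally show ?thesis .
qed

lemma cell_pos:
  fixes M :: "'b::{metric_space,second_countable_topology} measure"
  assumes "sets M = sets borel" "A \<in> sets borel" "measure M A \<noteq> 0"
  shows "\<exists>y\<in>A. y \<in> msupp M"
proof (rule ccontr)
  assume "\<not> ?thesis"
  then have "A \<inter> msupp M = {}" by auto
  then have "emeasure M A = 0" using supp_null assms by blast
  then show False using assms(3) by (simp add: measure_def)
qed

lemma exp_diff_le: fixes a b :: real shows "\<bar>exp a - exp b\<bar> \<le> exp (max a b) * \<bar>a - b\<bar>"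
proof -
  have *: "exp y - exp x \<le> exp y * (y - x)" for x y :: real
  proof -
    have "1 + (x - y) \<le> exp (x - y)" by (rule exp_ge_add_one_self)
    then have "exp y * (1 + (x - y)) \<le> exp y * exp (x - y)" by (intro mult_left_mono) auto
    then show ?thesis by (simp add: exp_diff algebra_simps)
  qed
  show ?thesis
  proof (cases "a \<le> b")
    case True
    then show ?thesis using *[of b a] *[of a b] by (simp add: abs_if max_def)
  next
    case False
    then show ?thesis using *[of b a] *[of a b] by (simp add: abs_if max_def)
  qed
qed

lemma BL1_const0: "(\<lambda>_. 0) \<in> BL1"
  unfolding BL1_def by (auto intro!: lipschitz_onI)

definition good :: "nat \<Rightarrow> real \<Rightarrow> 'a::euclidean_space measure \<Rightarrow> bool" where
  "good N \<rho> \<mu> \<longleftrightarrow> (\<exists>(K::('a + 'a \<times> 'a) set) w p. finite K \<and> (\<forall>k\<in>K. 0 \<le> w k \<and> p k \<in> G2 N \<and> norm (p k) \<le> \<rho>)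
      \<and> \<mu> = dmeas K w p)"

lemma good_mono: assumes "good N \<rho> \<mu>" "\<rho> \<le> \<rho>'" shows "good N \<rho>' \<mu>"
proof -
  obtain K :: "('a + 'a \<times> 'a) set" and w p where "finite K" "\<forall>k\<in>K. 0 \<le> w k \<and> p k \<in> G2 N \<and> norm (p k) \<le> \<rho>"
    "\<mu> = dmeas K w p" using assms(1) unfolding good_def by blast
  then show ?thesis unfolding good_def using assms(2)
    by (intro exI[of _ K] exI[of _ w] exI[of _ p]) force
qed

lemma good_fbm: "good N \<rho> \<mu> \<Longrightarrow> fbm \<mu>"
  unfolding good_def using dmeas_fbm by blast

locale setting =
  fixes V :: "'a::euclidean_space measure \<Rightarrow> ('a \<times> 'a) measure"
    and s :: "'a measure \<Rightarrow> 'a measure" and c :: "'a \<Rightarrow> 'a measure \<Rightarrow> real"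
    and C_S L R C_b :: real
  assumes V: "\<And>\<mu>. fbm \<mu> \<Longrightarrow> fbm (V \<mu>) \<and> distr (V \<mu>) borel fst = \<mu>"
    and V1: "\<And>\<mu> r. fbm \<mu> \<Longrightarrow> (\<forall>p\<in>msupp (V \<mu>). norm (fst p) \<le> r) \<Longrightarrow>
                 (\<forall>p\<in>msupp (V \<mu>). norm (snd p) \<le> C_S * (1 + r))"
    and S: "\<And>\<mu>. fbm \<mu> \<Longrightarrow> fbm (s \<mu>)"
    and S1: "\<And>\<mu> \<nu>. fbm \<mu> \<Longrightarrow> fbm \<nu> \<Longrightarrow> bl_dist (s \<mu>) (s \<nu>) \<le> L * bl_dist \<mu> \<nu>"
    and S2: "\<And>\<mu>. fbm \<mu> \<Longrightarrow> msupp (s \<mu>) \<subseteq> ball 0 R"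
    and C1: "\<And>x \<mu>. fbm \<mu> \<Longrightarrow> \<bar>c x \<mu>\<bar> \<le> C_b"
begin

definition "S0 = measure (s (null_measure borel)) UNIV"
definition "CS = \<bar>C_S\<bar>"
definition "Lp = max L 0"
definition "Cb = max C_b 0"
definition "DD = real DIM('a)"

lemma S0_nonneg: "S0 \<ge> 0" unfolding S0_def by simp
lemma CS_nonneg: "CS \<ge> 0" unfolding CS_def by simp
lemma Lp_nonneg: "Lp \<ge> 0" unfolding Lp_def by simp
lemma Cb_nonneg: "Cb \<ge> 0" unfolding Cb_def by simp
lemma DD_nonneg: "DD \<ge> 0" unfolding DD_def by simp

lemma c_bound: "fbm \<mu> \<Longrightarrow> \<bar>c x \<mu>\<bar> \<le> Cb"
  using C1[of \<mu> x] unfolding Cb_def by linarith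

lemma mass_V: "fbm \<mu> \<Longrightarrow> measure (V \<mu>) UNIV = measure \<mu> UNIV"
proof -
  assume \<mu>: "fbm \<mu>"
  have "fbm (V \<mu>)" "distr (V \<mu>) borel fst = \<mu>" using V[OF \<mu>] by auto
  then have "emeasure \<mu> UNIV = emeasure (V \<mu>) (UNIV \<times> UNIV)"
    by (intro marg_emeasure) (auto simp: fbm_def)
  then show ?thesis by (simp add: measure_def)
qed

lemma mass_s: assumes \<mu>: "fbm \<mu>" shows "measure (s \<mu>) UNIV \<le> S0 + Lp * measure \<mu> UNIV"
proof -
  have n: "fbm (null_measure borel)" by (rule fbm_null)
  have "measure (s \<mu>) UNIV - S0 \<le> bl_dist (s \<mu>) (s (null_measure borel))"
    unfolding S0_def by (rule mass_diff_le[OF S[OF \<mu>] S[OF n]])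
  also have "\<dots> \<le> L * bl_dist \<mu> (null_measure borel)" by (rule S1[OF \<mu> n])
  also have "\<dots> \<le> Lp * measure \<mu> UNIV"
  proof -
    have d0: "0 \<le> bl_dist \<mu> (null_measure borel)"
      using bl_dist_ge[OF \<mu> n BL1_const0] by simp
    have d1: "bl_dist \<mu> (null_measure borel) \<le> measure \<mu> UNIV" by (rule bl_dist_null[OF \<mu>])
    have "L * bl_dist \<mu> (null_measure borel) \<le> Lp * bl_dist \<mu> (null_measure borel)"
      using d0 unfolding Lp_def by (intro mult_right_mono) auto
    also have "\<dots> \<le> Lp * measure \<mu> UNIV" using d1 Lp_nonneg by (intro mult_left_mono) auto
    finally show ?thesis .
  qed
  finally show ?thesis by simp
qed

lemma suppV:
  assumes K: "finite K" and w: "\<And>k. k \<in> K \<Longrightarrow> 0 \<le> w k" and pn: "\<And>k. k \<in> K \<Longrightarrow> norm (p k) \<le> \<rho>"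
    and \<rho>: "0 \<le> \<rho>" and q: "q \<in> msupp (V (dmeas K w p))"
  shows "(\<exists>k\<in>K. 0 < w k \<and> fst q = p k) \<and> norm (snd q) \<le> CS * (1 + \<rho>)"
proof -
  let ?\<mu> = "dmeas K w p"
  have \<mu>: "fbm ?\<mu>" by (rule dmeas_fbm[OF K])
  have sV: "sets (V ?\<mu>) = sets borel" "distr (V ?\<mu>) borel fst = ?\<mu>" using V[OF \<mu>] by (auto simp: fbm_def)
  have fs: "\<exists>k\<in>K. 0 < w k \<and> fst q' = p k" if "q' \<in> msupp (V ?\<mu>)" for q'
    using marg_msupp[OF sV that] dmeas_msupp[OF K, of w p] by auto
  have "\<forall>q'\<in>msupp (V ?\<mu>). norm (fst q') \<le> \<rho>" using fs pn by force
  then have "norm (snd q) \<le> C_S * (1 + \<rho>)" using V1[OF \<mu>] q by blast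
  also have "\<dots> \<le> CS * (1 + \<rho>)" unfolding CS_def using \<rho> by (intro mult_right_mono) auto
  finally show ?thesis using fs[OF q] by blast
qed

lemma mv_pos:
  assumes K: "finite K" and w: "\<And>k. k \<in> K \<Longrightarrow> 0 \<le> w k" and pn: "\<And>k. k \<in> K \<Longrightarrow> norm (p k) \<le> \<rho>"
    and \<rho>: "0 \<le> \<rho>" and m: "mv N (V (dmeas K w p)) x v \<noteq> 0"
  shows "\<exists>k\<in>K. p k \<in> cellQ N x \<and> (\<exists>w'. w' \<in> cellQ' N v \<and> norm w' \<le> CS * (1 + \<rho>))"
proof -
  let ?\<mu> = "dmeas K w p"
  have \<mu>: "fbm ?\<mu>" by (rule dmeas_fbm[OF K])
  have sV: "sets (V ?\<mu>) = sets borel" using V[OF \<mu>] by (auto simp: fbm_def)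
  obtain q where q: "q \<in> cellQ N x \<times> cellQ' N v" "q \<in> msupp (V ?\<mu>)"
    using cell_pos[OF sV borel_Times[OF cellQ_sets cellQ'_sets]] m unfolding mv_def by blast
  from suppV[OF K w pn \<rho> q(2)] q(1) show ?thesis by (cases q) auto
qed

lemma mv_bound:
  assumes N: "N \<ge> 1" and g: "good N \<rho> \<mu>" and \<rho>: "0 \<le> \<rho>" and x: "x \<in> lat_x N"
    and m: "mv N (V \<mu>) x v \<noteq> 0"
  shows "norm x \<le> \<rho> \<and> norm v \<le> CS * (1 + \<rho>) + DD"
proof -
  obtain K :: "('a + 'a \<times> 'a) set" and w p where K: "finite K" and kk: "\<And>k. k \<in> K \<Longrightarrow> 0 \<le> w k \<and> p k \<in> G2 N \<and> norm (p k) \<le> \<rho>"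
    and \<mu>: "\<mu> = dmeas K w p"
    using g unfolding good_def by blast
  obtain k w' where k: "k \<in> K" "p k \<in> cellQ N x" and w': "w' \<in> cellQ' N v" "norm w' \<le> CS * (1 + \<rho>)"
    using mv_pos[OF K _ _ \<rho>, of w p N x v] kk m \<mu> by blast
  have "p k = x" using G2_cell_eq[OF N _ _ k(2)] kk[OF k(1)] x lat_x_G2 by blast
  then have nx: "norm x \<le> \<rho>" using kk[OF k(1)] by simp
  have "norm (w' - v) \<le> real DIM('a) / real N" by (rule cellQ'_norm[OF w'(1)])
  also have "\<dots> \<le> DD" unfolding DD_def using N by (simp add: divide_le_eq)
  finally have "norm v \<le> norm w' + DD" using norm_triangle_ineq3[of w' v] by (metis (no_types) add.commute diff_le_eq norm_minus_commute norm_triangle_ineq2 order_trans)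
  then show ?thesis using nx w' by simp
qed

end

lemma norm_le_via: "norm (y - x) \<le> a \<Longrightarrow> norm y \<le> b \<Longrightarrow> norm (x::'a::real_normed_vector) \<le> b + a"
  using norm_triangle_ineq2[of x y] norm_minus_commute[of x y] by linarith

context setting
begin

lemma finK: assumes "N \<ge> 1" shows "finite ((lat_x N :: 'a set) <+> (lat_x N :: 'a set) \<times> (lat_v N :: 'a set))"
  using finite_lat_x[OF assms, where 'a='a] finite_lat_v[OF assms, where 'a='a] by auto

lemma step_good:
  assumes N: "N \<ge> 1" and g: "good N \<rho> \<mu>" and \<rho>: "0 \<le> \<rho>"
  shows "good N (max (R + DD) (\<rho> + (CS * (1 + \<rho>) + DD) / real N)) (lat_step N s V c \<mu> (1 / real N))"
proof -
  have \<mu>: "fbm \<mu>" using good_fbm[OF g] .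
  define K0 where "K0 = (lat_x N :: 'a set) <+> (lat_x N :: 'a set) \<times> (lat_v N :: 'a set)"
  define w where "w = wst N s V c \<mu> (1 / real N)"
  define p :: "'a + 'a \<times> 'a \<Rightarrow> 'a" where "p = pst (1 / real N)"
  have fK: "finite K0" unfolding K0_def using finK[OF N] .
  have eq: "lat_step N s V c \<mu> (1 / real N) = dmeas {k\<in>K0. w k > 0} w p"
    unfolding K0_def w_def p_def by (subst lat_step_dmeas[OF N]) (rule dmeas_restrict[OF finK[OF N]])
  let ?r = "max (R + DD) (\<rho> + (CS * (1 + \<rho>) + DD) / real N)"
  have Npos: "real N > 0" using N by simp
  have main: "0 \<le> w k \<and> p k \<in> G2 N \<and> norm (p k) \<le> ?r" if k: "k \<in> K0" "w k > 0" for k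
  proof (cases k)
    case (Inl x)
    then have x: "x \<in> lat_x N" using k unfolding K0_def by auto
    have "mx N (s \<mu>) x \<noteq> 0" using k Inl unfolding w_def wst_def by auto
    then obtain y where y: "y \<in> cellQ N x" "y \<in> msupp (s \<mu>)"
      using cell_pos[OF _ cellQ_sets] S[OF \<mu>] unfolding mx_def fbm_def by blast
    have ny: "norm y \<le> R" using S2[OF \<mu>] y(2) by (auto simp: dist_norm subset_eq)
    have "norm (y - x) \<le> real DIM('a) / (real N)^2" by (rule cellQ_norm[OF y(1)])
    also have "\<dots> \<le> DD" unfolding DD_def using N by (simp add: divide_le_eq one_le_power)
    finally have "norm x \<le> R + DD" using norm_le_via ny by blast
    then show ?thesis using Inl x lat_x_G2 k unfolding p_def pst_def by auto
  next
    case (Inr q)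
    obtain x v where q: "q = (x, v)" by (cases q)
    have xv: "x \<in> lat_x N" "v \<in> lat_v N" using k Inr q unfolding K0_def by auto
    have "mv N (V \<mu>) x v \<noteq> 0" using k Inr q unfolding w_def wst_def by auto
    from mv_bound[OF N g \<rho> xv(1) this] have b: "norm x \<le> \<rho>" "norm v \<le> CS * (1 + \<rho>) + DD" by auto
    have "norm (x + (1 / real N) *\<^sub>R v) \<le> norm x + (1 / real N) * norm v"
      using norm_triangle_ineq[of x "(1 / real N) *\<^sub>R v"] Npos by simp
    also have "\<dots> \<le> \<rho> + (CS * (1 + \<rho>) + DD) / real N"
      using b Npos by (intro add_mono) (auto simp: divide_right_mono)
    finally have "norm (p k) \<le> ?r" unfolding p_def pst_def Inr q by simp
    moreover have "x + (1 / real N) *\<^sub>R v \<in> G2 N"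
      using G2_add[OF N, of x v] xv lat_x_G2 lat_v_G1 by blast
    then have "p k \<in> G2 N" unfolding p_def pst_def Inr q by simp
    ultimately show ?thesis using k by simp
  qed
  show ?thesis unfolding good_def eq
    by (intro exI[of _ "{k\<in>K0. w k > 0}"] exI[of _ w] exI[of _ p]) (use fK main in auto)
qed

lemma init_good:
  fixes \<mu>0 :: "'a measure"
  assumes N: "N \<ge> 1" and \<mu>0: "fbm \<mu>0" and r0: "msupp \<mu>0 \<subseteq> cball 0 r0"
  shows "good N (r0 + DD) (lat_init N \<mu>0)"
proof -
  define K0 where "K0 = (Inl ` lat_x N :: ('a + 'a \<times> 'a) set)"
  define w :: "'a + 'a \<times> 'a \<Rightarrow> real" where "w = case_sum (mx N \<mu>0) (\<lambda>_. 0)"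
  define p :: "'a + 'a \<times> 'a \<Rightarrow> 'a" where "p = case_sum (\<lambda>x. x) (\<lambda>_. 0)"
  have fK: "finite K0" unfolding K0_def using finite_lat_x[OF N, where 'a='a] by simp
  have eq0: "lat_init N \<mu>0 = dmeas K0 w p"
    unfolding lat_init_def dmeas_def K0_def w_def p_def
    by (simp add: sum.reindex inj_on_def)
  have eq: "lat_init N \<mu>0 = dmeas {k\<in>K0. w k > 0} w p"
    unfolding eq0 by (rule dmeas_restrict[OF fK])
  have main: "0 \<le> w k \<and> p k \<in> G2 N \<and> norm (p k) \<le> r0 + DD" if k: "k \<in> K0" "w k > 0" for k
  proof -
    obtain x where x: "k = Inl x" "x \<in> lat_x N" using k unfolding K0_def by auto
    have "mx N \<mu>0 x \<noteq> 0" using k x unfolding w_def by auto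
    then obtain y where y: "y \<in> cellQ N x" "y \<in> msupp \<mu>0"
      using cell_pos[OF _ cellQ_sets] \<mu>0 unfolding mx_def fbm_def by blast
    have ny: "norm y \<le> r0" using r0 y(2) by auto
    have "norm (y - x) \<le> real DIM('a) / (real N)^2" by (rule cellQ_norm[OF y(1)])
    also have "\<dots> \<le> DD" unfolding DD_def using N by (simp add: divide_le_eq one_le_power)
    finally have "norm x \<le> r0 + DD" using norm_le_via ny by blast
    then show ?thesis using x lat_x_G2 k unfolding p_def by auto
  qed
  show ?thesis unfolding good_def eq
    by (intro exI[of _ "{k\<in>K0. w k > 0}"] exI[of _ w] exI[of _ p]) (use fK main in auto)
qed

end

context setting
begin

lemma step_integral:
  assumes N: "N \<ge> 1" and \<tau>: "\<tau> \<ge> 0" and f: "f \<in> borel_measurable borel"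
  shows "integral\<^sup>L (lat_step N s V c \<mu> \<tau>) f =
    \<tau> * (\<Sum>x\<in>lat_x N. mx N (s \<mu>) x * f x) +
    (\<Sum>(x,v)\<in>lat_x N \<times> lat_v N. mv N (V \<mu>) x v * exp (c x \<mu> * \<tau>) * f (x + \<tau> *\<^sub>R v))"
proof -
  have "integral\<^sup>L (lat_step N s V c \<mu> \<tau>) f =
     (\<Sum>k\<in>lat_x N <+> lat_x N \<times> lat_v N. wst N s V c \<mu> \<tau> k * f (pst \<tau> k))"
    by (subst lat_step_dmeas[OF N], rule dmeas_integral[OF finK[OF N] wst_nonneg[OF \<tau>] f])
  also have "\<dots> = (\<Sum>x\<in>lat_x N. \<tau> * mx N (s \<mu>) x * f x) +
    (\<Sum>(x,v)\<in>lat_x N \<times> lat_v N. mv N (V \<mu>) x v * exp (c x \<mu> * \<tau>) * f (x + \<tau> *\<^sub>R v))"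
    by (subst sum.Plus[OF finite_lat_x[OF N] finite_cartesian_product[OF finite_lat_x[OF N] finite_lat_v[OF N]]])
      (simp add: comp_def wst_def pst_def case_prod_unfold)
  finally show ?thesis by (simp add: sum_distrib_left mult.assoc)
qed

lemma step_mass:
  assumes N: "N \<ge> 1" and \<tau>: "\<tau> \<ge> 0"
  shows "measure (lat_step N s V c \<mu> \<tau>) UNIV =
    \<tau> * (\<Sum>x\<in>lat_x N. mx N (s \<mu>) x) +
    (\<Sum>(x,v)\<in>lat_x N \<times> lat_v N. mv N (V \<mu>) x v * exp (c x \<mu> * \<tau>))"
proof -
  have "measure (lat_step N s V c \<mu> \<tau>) UNIV = integral\<^sup>L (lat_step N s V c \<mu> \<tau>) (\<lambda>_. 1)"
    using dmeas_fbm[OF finK[OF N]] lat_step_dmeas[OF N] fbm_int1 by metis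
  also have "\<dots> = \<tau> * (\<Sum>x\<in>lat_x N. mx N (s \<mu>) x) +
    (\<Sum>(x,v)\<in>lat_x N \<times> lat_v N. mv N (V \<mu>) x v * exp (c x \<mu> * \<tau>))"
    by (subst step_integral[OF N \<tau>]) auto
  finally show ?thesis .
qed

lemma step_fbm: "N \<ge> 1 \<Longrightarrow> fbm (lat_step N s V c \<mu> \<tau>)"
  using dmeas_fbm[OF finK] lat_step_dmeas by metis

lemma sum_mv_le_mass:
  assumes N: "N \<ge> 1" and \<mu>: "fbm \<mu>"
  shows "(\<Sum>(x,v)\<in>lat_x N \<times> lat_v N. mv N (V \<mu>) x v) \<le> measure \<mu> UNIV"
  using sum_mv_le[OF _ N, of "V \<mu>"] V[OF \<mu>] mass_V[OF \<mu>] by simp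

lemma sum_mx_s_le:
  assumes N: "N \<ge> 1" and \<mu>: "fbm \<mu>"
  shows "(\<Sum>x\<in>lat_x N. mx N (s \<mu>) x) \<le> S0 + Lp * measure \<mu> UNIV"
  using sum_mx_le[OF S[OF \<mu>] N] mass_s[OF \<mu>] by linarith

lemma step_mass_le:
  assumes N: "N \<ge> 1" and \<tau>: "\<tau> \<ge> 0" and \<mu>: "fbm \<mu>"
  shows "measure (lat_step N s V c \<mu> \<tau>) UNIV \<le> \<tau> * (S0 + Lp * measure \<mu> UNIV) + exp (Cb * \<tau>) * measure \<mu> UNIV"
proof -
  have a: "\<tau> * (\<Sum>x\<in>lat_x N. mx N (s \<mu>) x) \<le> \<tau> * (S0 + Lp * measure \<mu> UNIV)"
    using sum_mx_s_le[OF N \<mu>] \<tau> by (intro mult_left_mono) auto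
  have "(\<Sum>(x,v)\<in>lat_x N \<times> lat_v N. mv N (V \<mu>) x v * exp (c x \<mu> * \<tau>))
      \<le> (\<Sum>(x,v)\<in>lat_x N \<times> lat_v N. mv N (V \<mu>) x v * exp (Cb * \<tau>))"
  proof (intro sum_mono, clarify)
    fix x v
    have "c x \<mu> * \<tau> \<le> Cb * \<tau>" using c_bound[OF \<mu>, of x] \<tau> by (intro mult_right_mono) auto
    then show "mv N (V \<mu>) x v * exp (c x \<mu> * \<tau>) \<le> mv N (V \<mu>) x v * exp (Cb * \<tau>)"
      by (intro mult_left_mono) (auto simp: mv_nonneg)
  qed
  also have "\<dots> = exp (Cb * \<tau>) * (\<Sum>(x,v)\<in>lat_x N \<times> lat_v N. mv N (V \<mu>) x v)"
    by (simp add: sum_distrib_left case_prod_unfold mult.commute)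
  also have "\<dots> \<le> exp (Cb * \<tau>) * measure \<mu> UNIV"
    using sum_mv_le_mass[OF N \<mu>] by (intro mult_left_mono) auto
  finally show ?thesis using a step_mass[OF N \<tau>, where \<mu>=\<mu>] by linarith
qed

lemma moments:
  assumes N: "N \<ge> 1" and g: "good N \<rho> \<mu>" and \<rho>: "0 \<le> \<rho>"
  shows "(\<Sum>(x,v)\<in>lat_x N \<times> lat_v N. mv N (V \<mu>) x v * (1 + norm v + (norm v)^2))
     \<le> measure \<mu> UNIV * (1 + (CS * (1 + \<rho>) + DD) + (CS * (1 + \<rho>) + DD)^2)"
proof -
  let ?B = "CS * (1 + \<rho>) + DD"
  have \<mu>: "fbm \<mu>" using good_fbm[OF g] .
  have "(\<Sum>(x,v)\<in>lat_x N \<times> lat_v N. mv N (V \<mu>) x v * (1 + norm v + (norm v)^2))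
      \<le> (\<Sum>(x,v)\<in>lat_x N \<times> lat_v N. mv N (V \<mu>) x v * (1 + ?B + ?B^2))"
  proof (intro sum_mono, clarify)
    fix x v :: 'a assume xv: "x \<in> lat_x N" "v \<in> lat_v N"
    show "mv N (V \<mu>) x v * (1 + norm v + (norm v)^2) \<le> mv N (V \<mu>) x v * (1 + ?B + ?B^2)"
    proof (cases "mv N (V \<mu>) x v = 0")
      case False
      then have "norm v \<le> ?B" using mv_bound[OF N g \<rho> xv(1)] by blast
      then have "1 + norm v + (norm v)^2 \<le> 1 + ?B + ?B^2"
        by (intro add_mono power_mono) auto
      then show ?thesis by (intro mult_left_mono) (auto simp: mv_nonneg)
    qed simp
  qed
  also have "\<dots> = (1 + ?B + ?B^2) * (\<Sum>(x,v)\<in>lat_x N \<times> lat_v N. mv N (V \<mu>) x v)"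
    by (simp add: sum_distrib_right case_prod_unfold mult.commute)
  also have "\<dots> \<le> (1 + ?B + ?B^2) * measure \<mu> UNIV"
    using sum_mv_le_mass[OF N \<mu>] CS_nonneg DD_nonneg \<rho>
    by (intro mult_left_mono) auto
  finally show ?thesis by (simp add: mult.commute)
qed

end

lemma term_bound:
  fixes e1 e2 p1 p2 d E F B :: real
  assumes "\<bar>e1 - e2\<bar> \<le> E * d" "\<bar>p1\<bar> \<le> 1" "0 \<le> e2" "e2 \<le> F" "\<bar>p1 - p2\<bar> \<le> d * B"
  shows "\<bar>e1 * p1 - e2 * p2\<bar> \<le> d * (E + F * B)"
proof -
  have "e1 * p1 - e2 * p2 = (e1 - e2) * p1 + e2 * (p1 - p2)" by algebra
  then have "\<bar>e1 * p1 - e2 * p2\<bar> \<le> \<bar>e1 - e2\<bar> * \<bar>p1\<bar> + e2 * \<bar>p1 - p2\<bar>"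
    using assms(3) by (metis abs_mult abs_of_nonneg abs_triangle_ineq)
  also have "\<bar>e1 - e2\<bar> * \<bar>p1\<bar> \<le> E * d"
    using assms(1,2) by (metis abs_ge_zero mult_left_mono mult.right_neutral order_trans)
  also have "e2 * \<bar>p1 - p2\<bar> \<le> F * (d * B)"
    using assms(3,4,5) by (meson abs_ge_zero mult_mono order_trans)
  finally show ?thesis by (simp add: algebra_simps)
qed

context setting
begin

lemma step_lip:
  assumes N: "N \<ge> 1" and g: "good N \<rho> \<mu>" and \<rho>: "0 \<le> \<rho>"
    and t1: "0 \<le> \<tau>1" "\<tau>1 \<le> 1 / real N" and t2: "0 \<le> \<tau>2" "\<tau>2 \<le> 1 / real N" and \<psi>: "\<psi> \<in> BL1"
  shows "\<bar>integral\<^sup>L (lat_step N s V c \<mu> \<tau>1) \<psi> - integral\<^sup>L (lat_step N s V c \<mu> \<tau>2) \<psi>\<bar>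
    \<le> \<bar>\<tau>1 - \<tau>2\<bar> * ((S0 + Lp * measure \<mu> UNIV) + measure \<mu> UNIV * (Cb * exp Cb + exp Cb * (CS * (1 + \<rho>) + DD)))"
proof -
  have \<mu>: "fbm \<mu>" using good_fbm[OF g] .
  let ?m = "measure \<mu> UNIV"
  let ?B = "CS * (1 + \<rho>) + DD"
  let ?d = "\<bar>\<tau>1 - \<tau>2\<bar>"
  let ?X = "\<Sum>x\<in>lat_x N. mx N (s \<mu>) x * \<psi> x"
  let ?Y = "\<lambda>\<tau>. \<Sum>(x,v)\<in>lat_x N \<times> lat_v N. mv N (V \<mu>) x v * exp (c x \<mu> * \<tau>) * \<psi> (x + \<tau> *\<^sub>R v)"
  have m: "\<psi> \<in> borel_measurable borel" using BL1_meas[OF \<psi>] .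
  have Npos: "real N > 0" using N by simp
  have inv: "1 / real N \<le> 1" using N by (simp add: divide_le_eq)
  have t1': "\<tau>1 \<le> 1" using t1 inv by linarith
  have t2': "\<tau>2 \<le> 1" using t2 inv by linarith
  have X: "\<bar>?X\<bar> \<le> S0 + Lp * ?m"
  proof -
    have "\<bar>?X\<bar> \<le> (\<Sum>x\<in>lat_x N. \<bar>mx N (s \<mu>) x * \<psi> x\<bar>)" by (rule sum_abs)
    also have "\<dots> \<le> (\<Sum>x\<in>lat_x N. mx N (s \<mu>) x)"
      using BL1_D[OF \<psi>] by (intro sum_mono) (auto simp: abs_mult mx_nonneg intro!: mult_left_le)
    also have "\<dots> \<le> S0 + Lp * ?m" by (rule sum_mx_s_le[OF N \<mu>])
    finally show ?thesis .
  qed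
  have A: "\<bar>\<tau>1 * ?X - \<tau>2 * ?X\<bar> \<le> ?d * (S0 + Lp * ?m)"
  proof -
    have "\<bar>\<tau>1 * ?X - \<tau>2 * ?X\<bar> = ?d * \<bar>?X\<bar>" by (simp add: abs_mult left_diff_distrib[symmetric])
    also have "\<dots> \<le> ?d * (S0 + Lp * ?m)" using X by (intro mult_left_mono) auto
    finally show ?thesis .
  qed
  have trm: "\<bar>mv N (V \<mu>) x v * exp (c x \<mu> * \<tau>1) * \<psi> (x + \<tau>1 *\<^sub>R v) - mv N (V \<mu>) x v * exp (c x \<mu> * \<tau>2) * \<psi> (x + \<tau>2 *\<^sub>R v)\<bar>
      \<le> mv N (V \<mu>) x v * (?d * (Cb * exp Cb + exp Cb * ?B))" if xv: "x \<in> lat_x N" "v \<in> lat_v N" for x v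
  proof (cases "mv N (V \<mu>) x v = 0")
    case True then show ?thesis by simp
  next
    case False
    have nv: "norm v \<le> ?B" using mv_bound[OF N g \<rho> xv(1) False] by blast
    have cb: "\<bar>c x \<mu>\<bar> \<le> Cb" by (rule c_bound[OF \<mu>])
    have a1: "c x \<mu> * \<tau>1 \<le> Cb"
    proof -
      have "c x \<mu> * \<tau>1 \<le> \<bar>c x \<mu>\<bar> * \<tau>1" using t1 by (intro mult_right_mono) auto
      also have "\<dots> \<le> Cb * 1" using cb t1 t1' Cb_nonneg by (intro mult_mono) auto
      finally show ?thesis by simp
    qed
    have a2: "c x \<mu> * \<tau>2 \<le> Cb"
    proof -
      have "c x \<mu> * \<tau>2 \<le> \<bar>c x \<mu>\<bar> * \<tau>2" using t2 by (intro mult_right_mono) auto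
      also have "\<dots> \<le> Cb * 1" using cb t2 t2' Cb_nonneg by (intro mult_mono) auto
      finally show ?thesis by simp
    qed
    have e: "\<bar>exp (c x \<mu> * \<tau>1) - exp (c x \<mu> * \<tau>2)\<bar> \<le> (Cb * exp Cb) * ?d"
    proof -
      have "\<bar>exp (c x \<mu> * \<tau>1) - exp (c x \<mu> * \<tau>2)\<bar> \<le> exp (max (c x \<mu> * \<tau>1) (c x \<mu> * \<tau>2)) * \<bar>c x \<mu> * \<tau>1 - c x \<mu> * \<tau>2\<bar>"
        by (rule exp_diff_le)
      also have "\<dots> \<le> exp Cb * (Cb * ?d)"
      proof (rule mult_mono)
        show "exp (max (c x \<mu> * \<tau>1) (c x \<mu> * \<tau>2)) \<le> exp Cb" using a1 a2 by simp
        have "\<bar>c x \<mu> * \<tau>1 - c x \<mu> * \<tau>2\<bar> = \<bar>c x \<mu>\<bar> * ?d" by (simp add: abs_mult right_diff_distrib[symmetric])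
        also have "\<dots> \<le> Cb * ?d" using cb by (intro mult_right_mono) auto
        finally show "\<bar>c x \<mu> * \<tau>1 - c x \<mu> * \<tau>2\<bar> \<le> Cb * ?d" .
      qed auto
      finally show ?thesis by (simp add: algebra_simps)
    qed
    have e2: "exp (c x \<mu> * \<tau>2) \<le> exp Cb" using a2 by simp
    have p: "\<bar>\<psi> (x + \<tau>1 *\<^sub>R v) - \<psi> (x + \<tau>2 *\<^sub>R v)\<bar> \<le> ?d * ?B"
    proof -
      have "\<bar>\<psi> (x + \<tau>1 *\<^sub>R v) - \<psi> (x + \<tau>2 *\<^sub>R v)\<bar> \<le> dist (x + \<tau>1 *\<^sub>R v) (x + \<tau>2 *\<^sub>R v)"
        by (rule BL1_lip[OF \<psi>])
      also have "\<dots> = ?d * norm v" by (simp add: dist_norm scaleR_diff_left[symmetric])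
      also have "\<dots> \<le> ?d * ?B" using nv by (intro mult_left_mono) auto
      finally show ?thesis .
    qed
    have "\<bar>exp (c x \<mu> * \<tau>1) * \<psi> (x + \<tau>1 *\<^sub>R v) - exp (c x \<mu> * \<tau>2) * \<psi> (x + \<tau>2 *\<^sub>R v)\<bar>
        \<le> ?d * (Cb * exp Cb + exp Cb * ?B)"
      by (rule term_bound[OF e BL1_D[OF \<psi>] _ e2 p]) simp
    then have "mv N (V \<mu>) x v * \<bar>exp (c x \<mu> * \<tau>1) * \<psi> (x + \<tau>1 *\<^sub>R v) - exp (c x \<mu> * \<tau>2) * \<psi> (x + \<tau>2 *\<^sub>R v)\<bar>
        \<le> mv N (V \<mu>) x v * (?d * (Cb * exp Cb + exp Cb * ?B))"
      by (intro mult_left_mono) (auto simp: mv_nonneg)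
    then show ?thesis by (simp add: abs_mult mv_nonneg right_diff_distrib[symmetric] mult.assoc)
  qed
  have B: "\<bar>?Y \<tau>1 - ?Y \<tau>2\<bar> \<le> ?d * (?m * (Cb * exp Cb + exp Cb * ?B))"
  proof -
    define f1 where "f1 = (\<lambda>q. case q of (x,v) \<Rightarrow> mv N (V \<mu>) x v * exp (c x \<mu> * \<tau>1) * \<psi> (x + \<tau>1 *\<^sub>R v))"
    define f2 where "f2 = (\<lambda>q. case q of (x,v) \<Rightarrow> mv N (V \<mu>) x v * exp (c x \<mu> * \<tau>2) * \<psi> (x + \<tau>2 *\<^sub>R v))"
    define g where "g = (\<lambda>q. case q of (x,v) \<Rightarrow> mv N (V \<mu>) x v)"
    define K where "K = ?d * (Cb * exp Cb + exp Cb * ?B)"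
    have K0: "K \<ge> 0" unfolding K_def using CS_nonneg DD_nonneg Cb_nonneg \<rho> by simp
    have e1: "?Y \<tau>1 - ?Y \<tau>2 = (\<Sum>q\<in>lat_x N \<times> lat_v N. f1 q - f2 q)"
      unfolding f1_def f2_def by (rule sum_subtractf[symmetric])
    have e2: "\<bar>\<Sum>q\<in>lat_x N \<times> lat_v N. f1 q - f2 q\<bar> \<le> (\<Sum>q\<in>lat_x N \<times> lat_v N. \<bar>f1 q - f2 q\<bar>)"
      by (rule sum_abs)
    have e3: "(\<Sum>q\<in>lat_x N \<times> lat_v N. \<bar>f1 q - f2 q\<bar>) \<le> (\<Sum>q\<in>lat_x N \<times> lat_v N. g q * K)"
    proof (rule sum_mono)
      fix q :: "'a \<times> 'a" assume q: "q \<in> lat_x N \<times> lat_v N"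
      obtain x v where xv: "q = (x, v)" by (cases q)
      have "x \<in> lat_x N" "v \<in> lat_v N" using q xv by auto
      from trm[OF this] show "\<bar>f1 q - f2 q\<bar> \<le> g q * K"
        unfolding f1_def f2_def g_def K_def xv by simp
    qed
    have e4: "(\<Sum>q\<in>lat_x N \<times> lat_v N. g q * K) = K * (\<Sum>q\<in>lat_x N \<times> lat_v N. g q)"
      by (simp add: sum_distrib_left mult.commute)
    have e5: "(\<Sum>q\<in>lat_x N \<times> lat_v N. g q) \<le> ?m"
      using sum_mv_le_mass[OF N \<mu>] unfolding g_def .
    have "K * (\<Sum>q\<in>lat_x N \<times> lat_v N. g q) \<le> K * ?m"
      by (rule mult_left_mono[OF e5 K0])
    then have "\<bar>?Y \<tau>1 - ?Y \<tau>2\<bar> \<le> K * ?m" using e1 e2 e3 e4 by linarith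
    then show ?thesis unfolding K_def by (simp add: algebra_simps)
  qed
  have "integral\<^sup>L (lat_step N s V c \<mu> \<tau>1) \<psi> - integral\<^sup>L (lat_step N s V c \<mu> \<tau>2) \<psi>
      = (\<tau>1 * ?X - \<tau>2 * ?X) + (?Y \<tau>1 - ?Y \<tau>2)"
    using step_integral[OF N t1(1) m, of \<mu>] step_integral[OF N t2(1) m, of \<mu>] by simp
  also have "\<bar>\<dots>\<bar> \<le> ?d * (S0 + Lp * ?m) + ?d * (?m * (Cb * exp Cb + exp Cb * ?B))"
    by (rule order_trans[OF abs_triangle_ineq add_mono[OF A B]])
  finally show ?thesis by (simp add: algebra_simps)
qed

end

context setting
begin

lemma sum_v_mv:
  assumes N: "N \<ge> 1" and g: "good N \<rho> \<mu>" and \<rho>: "0 \<le> \<rho>" and B: "CS * (1 + \<rho>) < real N"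
    and x: "x \<in> lat_x N"
  shows "(\<Sum>v\<in>lat_v N. mv N (V \<mu>) x v) = mx N \<mu> x"
proof -
  obtain K :: "('a + 'a \<times> 'a) set" and w p where K: "finite K" and kk: "\<And>k. k \<in> K \<Longrightarrow> 0 \<le> w k \<and> p k \<in> G2 N \<and> norm (p k) \<le> \<rho>"
    and \<mu>def: "\<mu> = dmeas K w p"
    using g unfolding good_def by blast
  have \<mu>: "fbm \<mu>" using good_fbm[OF g] .
  have fV: "fbm (V \<mu>)" and dV: "distr (V \<mu>) borel fst = \<mu>" using V[OF \<mu>] by auto
  have sV: "sets (V \<mu>) = sets borel" using fV unfolding fbm_def by auto
  interpret finite_measure "V \<mu>" using fV unfolding fbm_def by auto
  let ?U = "\<Union>v\<in>(lat_v N :: 'a set). cellQ N x \<times> cellQ' N v"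
  have fv: "finite (lat_v N :: 'a set)" using finite_lat_v[OF N, where 'a='a] .
  have Usets: "?U \<in> sets borel"
    using fv by (intro sets.finite_UN) (auto intro!: borel_Times)
  have "(\<Sum>v\<in>lat_v N. mv N (V \<mu>) x v) = measure (V \<mu>) ?U"
    unfolding mv_def
  proof (rule measure_finite_Union[symmetric])
    show "finite (lat_v N :: 'a set)" using fv .
    show "(\<lambda>v::'a. cellQ N x \<times> cellQ' N v) ` lat_v N \<subseteq> sets (V \<mu>)" using sV by (auto intro!: borel_Times)
    show "disjoint_family_on (\<lambda>v::'a. cellQ N x \<times> cellQ' N v) (lat_v N)"
      unfolding disjoint_family_on_def
    proof (intro ballI impI)
      fix v v' :: 'a assume "v \<in> lat_v N" "v' \<in> lat_v N" "v \<noteq> v'"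
      then have "cellQ' N v \<inter> cellQ' N v' = {}" using cellQ'_disj[OF N] lat_v_G1 by blast
      then show "(cellQ N x \<times> cellQ' N v) \<inter> (cellQ N x \<times> cellQ' N v') = {}" by auto
    qed
  qed (auto simp: emeasure_eq_measure)
  also have "\<dots> = measure (V \<mu>) (cellQ N x \<times> UNIV)"
  proof -
    let ?Z = "cellQ N x \<times> UNIV - ?U"
    have Zs: "?Z \<in> sets borel" using Usets by (intro sets.Diff borel_Times) auto
    have "?Z \<inter> msupp (V \<mu>) = {}"
    proof (rule ccontr)
      assume "?Z \<inter> msupp (V \<mu>) \<noteq> {}"
      then obtain q where q: "q \<in> ?Z" "q \<in> msupp (V \<mu>)" by blast
      have "norm (snd q) \<le> CS * (1 + \<rho>)"
        using suppV[OF K, of w p \<rho>] kk \<rho> q(2) \<mu>def by blast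
      then have "norm (snd q) < real N" using B by linarith
      then obtain v where "v \<in> lat_v N" "snd q \<in> cellQ' N v" using cover_v[OF N] by blast
      then show False using q(1) by (cases q) auto
    qed
    then have "emeasure (V \<mu>) ?Z = 0" by (rule supp_null[OF sV Zs])
    then have Zn: "?Z \<in> null_sets (V \<mu>)" using Zs sV by (auto simp: null_sets_def)
    have "cellQ N x \<times> UNIV = ?U \<union> ?Z" by auto
    then have "emeasure (V \<mu>) (cellQ N x \<times> UNIV) = emeasure (V \<mu>) ?U"
      using emeasure_Un_null_set[OF _ Zn, of ?U] Usets sV by simp
    then show ?thesis by (simp add: measure_def)
  qed
  also have "\<dots> = mx N \<mu> x"
    unfolding mx_def using marg_emeasure[OF sV dV cellQ_sets, of N x] by (simp add: measure_def)
  finally show ?thesis .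
qed

lemma capture:
  fixes f :: "'a \<Rightarrow> real"
  assumes N: "N \<ge> 1" and g: "good N \<rho> \<mu>" and \<rho>: "0 \<le> \<rho>" and \<rho>N: "\<rho> \<le> real N"
    and B: "CS * (1 + \<rho>) < real N" and f: "f \<in> borel_measurable borel"
  shows "integral\<^sup>L (lat_step N s V c \<mu> 0) f = integral\<^sup>L \<mu> f"
proof -
  obtain K :: "('a + 'a \<times> 'a) set" and w p where K: "finite K" and kk: "\<And>k. k \<in> K \<Longrightarrow> 0 \<le> w k \<and> p k \<in> G2 N \<and> norm (p k) \<le> \<rho>"
    and \<mu>def: "\<mu> = dmeas K w p"
    using g unfolding good_def by blast
  have fx: "finite (lat_x N :: 'a set)" using finite_lat_x[OF N, where 'a='a] .
  have "integral\<^sup>L (lat_step N s V c \<mu> 0) f = (\<Sum>(x,v)\<in>lat_x N \<times> lat_v N. mv N (V \<mu>) x v * f x)"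
    using step_integral[OF N _ f, of 0 \<mu>] by simp
  also have "\<dots> = (\<Sum>x\<in>lat_x N. f x * (\<Sum>v\<in>lat_v N. mv N (V \<mu>) x v))"
    by (simp add: sum.cartesian_product[symmetric] sum_distrib_left mult.commute)
  also have "\<dots> = (\<Sum>x\<in>lat_x N. f x * mx N \<mu> x)"
    using sum_v_mv[OF N g \<rho> B] by simp
  also have "\<dots> = (\<Sum>x\<in>lat_x N. f x * (\<Sum>k\<in>K. w k * indicator (cellQ N x) (p k)))"
  proof -
    have wn: "\<And>k. k \<in> K \<Longrightarrow> 0 \<le> w k" using kk by blast
    show ?thesis unfolding mx_def \<mu>def by (simp add: dmeas_measure[OF K wn cellQ_sets])
  qed
  also have "\<dots> = (\<Sum>k\<in>K. \<Sum>x\<in>lat_x N. w k * (f x * indicator (cellQ N x) (p k)))"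
    by (simp add: sum_distrib_left sum.swap[of _ "lat_x N"] algebra_simps)
  also have "\<dots> = (\<Sum>k\<in>K. w k * f (p k))"
  proof (rule sum.cong[OF refl])
    fix k assume k: "k \<in> K"
    have pk: "p k \<in> lat_x N" using in_lat_x[of "p k" N] kk[OF k] \<rho>N by auto
    have "(\<Sum>x\<in>lat_x N. w k * (f x * indicator (cellQ N x) (p k))) = (\<Sum>x\<in>lat_x N. if x = p k then w k * f x else 0)"
    proof (rule sum.cong[OF refl])
      fix x :: 'a assume x: "x \<in> lat_x N"
      have "p k \<in> cellQ N x \<longleftrightarrow> x = p k"
      proof
        assume "p k \<in> cellQ N x"
        then show "x = p k" using G2_cell_eq[OF N _ _] x lat_x_G2 kk[OF k] by (metis subsetD)
      next
        assume "x = p k"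
        then show "p k \<in> cellQ N x" unfolding cellQ_def using N by auto
      qed
      then show "w k * (f x * indicator (cellQ N x) (p k)) = (if x = p k then w k * f x else 0)"
        by (auto simp: indicator_def)
    qed
    also have "\<dots> = w k * f (p k)" using pk fx by simp
    finally show "(\<Sum>x\<in>lat_x N. w k * (f x * indicator (cellQ N x) (p k))) = w k * f (p k)" .
  qed
  also have "\<dots> = integral\<^sup>L \<mu> f"
  proof -
    have wn: "\<And>k. k \<in> K \<Longrightarrow> 0 \<le> w k" using kk by blast
    show ?thesis unfolding \<mu>def by (simp add: dmeas_integral[OF K wn f])
  qed
  finally show ?thesis .
qed

end

lemma mass_rec:
  fixes \<tau> m S0 Lp Cb m0 a :: real
  assumes "\<tau> \<ge> 0" "m \<ge> 0" "S0 \<ge> 0" "Lp \<ge> 0" "Cb \<ge> 0" "a \<ge> 0" "m0 \<ge> 0"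
    and m: "m \<le> (m0 + S0 * a) * exp ((Lp + Cb) * a)"
  shows "\<tau> * (S0 + Lp * m) + exp (Cb * \<tau>) * m \<le> (m0 + S0 * (a + \<tau>)) * exp ((Lp + Cb) * (a + \<tau>))"
proof -
  have e1: "1 \<le> exp (Cb * \<tau>)" using assms by simp
  have nn: "0 \<le> \<tau> * Lp * m" using assms by simp
  have "\<tau> * Lp * m \<le> exp (Cb * \<tau>) * (\<tau> * Lp * m)"
    using mult_right_mono[OF e1 nn] by simp
  then have "\<tau> * Lp * m + exp (Cb * \<tau>) * m \<le> exp (Cb * \<tau>) * ((1 + Lp * \<tau>) * m)"
    by (simp add: algebra_simps)
  also have "\<dots> \<le> exp (Cb * \<tau>) * (exp (Lp * \<tau>) * m)"
    using assms exp_ge_add_one_self[of "Lp * \<tau>"] by (intro mult_left_mono mult_right_mono) auto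
  also have "\<dots> = exp ((Lp + Cb) * \<tau>) * m" by (simp add: algebra_simps exp_add[symmetric])
  also have "\<dots> \<le> exp ((Lp + Cb) * \<tau>) * ((m0 + S0 * a) * exp ((Lp + Cb) * a))"
    using m by (intro mult_left_mono) auto
  also have "\<dots> = (m0 + S0 * a) * exp ((Lp + Cb) * (a + \<tau>))"
    by (simp add: algebra_simps exp_add[symmetric])
  finally have A: "\<tau> * Lp * m + exp (Cb * \<tau>) * m \<le> (m0 + S0 * a) * exp ((Lp + Cb) * (a + \<tau>))" .
  have e2: "1 \<le> exp ((Lp + Cb) * (a + \<tau>))" using assms by simp
  have nn2: "0 \<le> S0 * \<tau>" using assms by simp
  have B: "\<tau> * S0 \<le> (S0 * \<tau>) * exp ((Lp + Cb) * (a + \<tau>))"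
    using mult_left_mono[OF e2 nn2] by (simp add: mult.commute)
  have "\<tau> * (S0 + Lp * m) + exp (Cb * \<tau>) * m = \<tau> * S0 + (\<tau> * Lp * m + exp (Cb * \<tau>) * m)"
    by (simp add: algebra_simps)
  also have "\<dots> \<le> (S0 * \<tau>) * exp ((Lp + Cb) * (a + \<tau>)) + (m0 + S0 * a) * exp ((Lp + Cb) * (a + \<tau>))"
    using A B by linarith
  also have "\<dots> = (m0 + S0 * (a + \<tau>)) * exp ((Lp + Cb) * (a + \<tau>))" by (simp add: algebra_simps)
  finally show ?thesis .
qed

context setting
begin

lemma init_mass:
  assumes N: "N \<ge> 1" and \<mu>0: "fbm \<mu>0"
  shows "measure (lat_init N \<mu>0) UNIV \<le> measure \<mu>0 UNIV"
proof -
  have "measure (lat_init N \<mu>0) UNIV = (\<Sum>x\<in>lat_x N. mx N \<mu>0 x)"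
    unfolding lat_init_dmeas by (subst dmeas_measure[OF finite_lat_x[OF N]]) (auto simp: mx_nonneg)
  also have "\<dots> \<le> measure \<mu>0 UNIV" by (rule sum_mx_le[OF \<mu>0 N])
  finally show ?thesis .
qed

lemma grid_inv:
  fixes \<mu>0 :: "'a measure"
  assumes N: "N \<ge> 1" and \<mu>0: "fbm \<mu>0" and r0: "msupp \<mu>0 \<subseteq> cball 0 r0" "r0 \<ge> 0"
  shows "good N ((r0 + \<bar>R\<bar> + DD + 1) * (1 + (CS + DD) / real N)^l - 1) (lat_grid N s V c \<mu>0 l) \<and>
    measure (lat_grid N s V c \<mu>0 l) UNIV \<le> (measure \<mu>0 UNIV + S0 * (real l / real N)) * exp ((Lp + Cb) * (real l / real N))"
proof (induction l)
  case 0
  have "good N (r0 + DD) (lat_init N \<mu>0)" by (rule init_good[OF N \<mu>0 r0(1)])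
  then have "good N ((r0 + \<bar>R\<bar> + DD + 1) * (1 + (CS + DD) / real N)^0 - 1) (lat_init N \<mu>0)"
    by (rule good_mono) simp
  then show ?case using init_mass[OF N \<mu>0] by simp
next
  case (Suc l)
  let ?q = "1 + (CS + DD) / real N"
  let ?Rb = "r0 + \<bar>R\<bar> + DD + 1"
  let ?\<rho> = "?Rb * ?q^l - 1"
  let ?\<mu> = "lat_grid N s V c \<mu>0 l"
  have Npos: "real N > 0" using N by simp
  have q1: "?q \<ge> 1" using CS_nonneg DD_nonneg Npos by simp
  have Rb1: "?Rb \<ge> 1" using r0 DD_nonneg by simp
  have ql: "?q^l \<ge> 1" using q1 by (simp add: one_le_power)
  have "1 * 1 \<le> ?Rb * ?q^l" by (rule mult_mono) (use Rb1 ql in auto)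
  then have \<rho>0: "?\<rho> \<ge> 0" by simp
  have g: "good N ?\<rho> ?\<mu>" using Suc.IH by blast
  have \<mu>: "fbm ?\<mu>" using good_fbm[OF g] .
  have g': "good N (max (R + DD) (?\<rho> + (CS * (1 + ?\<rho>) + DD) / real N)) (lat_grid N s V c \<mu>0 (Suc l))"
    using step_good[OF N g \<rho>0] by simp
  have b1: "?\<rho> + (CS * (1 + ?\<rho>) + DD) / real N \<le> ?Rb * ?q^(Suc l) - 1"
  proof -
    have aux: "\<And>r. 0 \<le> r \<Longrightarrow> CS * (1 + r) + DD \<le> (CS + DD) * (1 + r)"
      using DD_nonneg by (simp add: algebra_simps)
    have "CS * (1 + ?\<rho>) + DD \<le> (CS + DD) * (1 + ?\<rho>)" by (rule aux[OF \<rho>0])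
    then have "(CS * (1 + ?\<rho>) + DD) / real N \<le> (CS + DD) * (1 + ?\<rho>) / real N"
      using Npos by (simp add: divide_right_mono)
    moreover have "?\<rho> + (CS + DD) * (1 + ?\<rho>) / real N = ?Rb * ?q^(Suc l) - 1"
      using Npos by (simp add: field_simps)
    ultimately show ?thesis by linarith
  qed
  have b2: "R + DD \<le> ?Rb * ?q^(Suc l) - 1"
  proof -
    have qS: "1 \<le> ?q^(Suc l)" using q1 by (rule one_le_power)
    have "?Rb * 1 \<le> ?Rb * ?q^(Suc l)" by (rule mult_left_mono[OF qS]) (use Rb1 in simp)
    then have "?Rb \<le> ?Rb * ?q^(Suc l)" by (simp only: mult_1_right)
    then show ?thesis using r0 abs_ge_self[of R] by linarith
  qed
  have G: "good N (?Rb * ?q^(Suc l) - 1) (lat_grid N s V c \<mu>0 (Suc l))"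
    by (rule good_mono[OF g']) (use b1 b2 in simp)
  have "measure (lat_grid N s V c \<mu>0 (Suc l)) UNIV \<le> (1 / real N) * (S0 + Lp * measure ?\<mu> UNIV) + exp (Cb * (1 / real N)) * measure ?\<mu> UNIV"
    using step_mass_le[OF N _ \<mu>, of "1 / real N"] by simp
  also have "\<dots> \<le> (measure \<mu>0 UNIV + S0 * (real l / real N + 1 / real N)) * exp ((Lp + Cb) * (real l / real N + 1 / real N))"
    using Suc.IH by (intro mass_rec) (auto simp: S0_nonneg Lp_nonneg Cb_nonneg)
  also have "real l / real N + 1 / real N = real (Suc l) / real N" by (simp add: add_divide_distrib)
  finally show ?case using G by simp
qed

end

locale run = setting V s c C_S L R C_b for V s c C_S L R C_b +
  fixes \<mu>0 :: "'a measure" and T r0 :: real and N :: nat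
  assumes T: "T > 0" and mu0: "fbm \<mu>0" and r0: "msupp \<mu>0 \<subseteq> cball 0 r0" "r0 \<ge> 0" and N: "N \<ge> 1"
    and big1: "(r0 + \<bar>R\<bar> + real DIM('a) + 1) * exp ((\<bar>C_S\<bar> + real DIM('a)) * (T + 1)) - 1 < real N"
    and big2: "\<bar>C_S\<bar> * (1 + ((r0 + \<bar>R\<bar> + real DIM('a) + 1) * exp ((\<bar>C_S\<bar> + real DIM('a)) * (T + 1)) - 1)) < real N"
begin

definition "Rb = r0 + \<bar>R\<bar> + DD + 1"
definition "\<rho>s = Rb * exp ((CS + DD) * (T + 1)) - 1"
definition "Ms = (measure \<mu>0 UNIV + S0 * (T + 1)) * exp ((Lp + Cb) * (T + 1))"
definition "Bv = CS * (1 + \<rho>s) + DD"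
definition "K1 = (S0 + Lp * Ms) + Ms * (Cb * exp Cb + exp Cb * Bv)"

abbreviation "grid l \<equiv> lat_grid N s V c \<mu>0 l"
abbreviation "sol t \<equiv> lat_sol N s V c \<mu>0 t"

lemma big: "\<rho>s < real N" "CS * (1 + \<rho>s) < real N"
  using big1 big2 unfolding \<rho>s_def Rb_def CS_def DD_def by auto

lemma Npos: "real N > 0" using N by simp

lemma Rb1: "Rb \<ge> 1" unfolding Rb_def using r0 DD_nonneg by simp

lemma \<rho>s_nonneg: "\<rho>s \<ge> 0"
proof -
  have "1 \<le> exp ((CS + DD) * (T + 1))" using CS_nonneg DD_nonneg T by simp
  then have "1 * 1 \<le> Rb * exp ((CS + DD) * (T + 1))" by (intro mult_mono) (use Rb1 in auto)
  then show ?thesis unfolding \<rho>s_def by simp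
qed

lemma Ms_nonneg: "Ms \<ge> 0"
  unfolding Ms_def using S0_nonneg T by (intro mult_nonneg_nonneg) auto

lemma Bv_nonneg: "Bv \<ge> 0"
  unfolding Bv_def using CS_nonneg DD_nonneg \<rho>s_nonneg by simp

lemma K1_nonneg: "K1 \<ge> 0"
  unfolding K1_def using S0_nonneg Lp_nonneg Ms_nonneg Cb_nonneg Bv_nonneg by simp

lemma rho_le:
  assumes "real l / real N \<le> T + 1"
  shows "Rb * (1 + (CS + DD) / real N)^l - 1 \<le> \<rho>s"
proof -
  have "(1 + (CS + DD) / real N)^l \<le> exp ((CS + DD) / real N)^l"
    using CS_nonneg DD_nonneg Npos by (intro power_mono) (auto intro: exp_ge_add_one_self order_trans)
  also have "\<dots> = exp (real l * ((CS + DD) / real N))" by (rule exp_of_nat_mult[symmetric])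
  also have "\<dots> \<le> exp ((CS + DD) * (T + 1))"
  proof -
    have "real l * ((CS + DD) / real N) = (CS + DD) * (real l / real N)" by simp
    also have "\<dots> \<le> (CS + DD) * (T + 1)" using assms CS_nonneg DD_nonneg by (intro mult_left_mono) auto
    finally show ?thesis by simp
  qed
  finally have "(1 + (CS + DD) / real N)^l \<le> exp ((CS + DD) * (T + 1))" .
  then have "Rb * (1 + (CS + DD) / real N)^l \<le> Rb * exp ((CS + DD) * (T + 1))"
    using Rb1 by (intro mult_left_mono) auto
  then show ?thesis unfolding \<rho>s_def by simp
qed

lemma mass_le_Ms:
  assumes "0 \<le> a" "a \<le> T + 1"
  shows "(measure \<mu>0 UNIV + S0 * a) * exp ((Lp + Cb) * a) \<le> Ms"
  unfolding Ms_def
proof (rule mult_mono)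
  show "measure \<mu>0 UNIV + S0 * a \<le> measure \<mu>0 UNIV + S0 * (T + 1)"
    using assms S0_nonneg by (simp add: mult_left_mono)
  show "exp ((Lp + Cb) * a) \<le> exp ((Lp + Cb) * (T + 1))"
    using assms Lp_nonneg Cb_nonneg by (simp add: mult_left_mono)
qed (use S0_nonneg T in auto)

lemma grid_ok:
  assumes "real l / real N \<le> T + 1"
  shows "good N \<rho>s (grid l) \<and> measure (grid l) UNIV \<le> Ms"
proof -
  have inv: "good N (Rb * (1 + (CS + DD) / real N)^l - 1) (grid l) \<and>
    measure (grid l) UNIV \<le> (measure \<mu>0 UNIV + S0 * (real l / real N)) * exp ((Lp + Cb) * (real l / real N))"
    using grid_inv[OF N mu0 r0] unfolding Rb_def by blast
  have "good N \<rho>s (grid l)" using good_mono inv rho_le[OF assms] by blast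
  moreover have "measure (grid l) UNIV \<le> Ms"
    using inv mass_le_Ms[of "real l / real N"] assms by force
  ultimately show ?thesis by blast
qed

lemma sol_eq:
  assumes t: "0 < t" and l1: "real l / real N < t" and l2: "t \<le> (real l + 1) / real N"
  shows "sol t = lat_step N s V c (grid l) (t - real l / real N)"
proof -
  have a: "real l < t * real N" using l1 Npos by (simp add: divide_less_eq)
  have b: "t * real N \<le> real l + 1" using l2 Npos by (simp add: le_divide_eq)
  have "\<lceil>t * real N\<rceil> = int l + 1" by (rule ceiling_unique) (use a b in auto)
  then have "nat (\<lceil>t * real N\<rceil> - 1) = l" by simp
  then show ?thesis unfolding lat_sol_def Let_def using t by simp
qed

lemma sol_ex:
  assumes t: "0 < t"
  obtains l where "real l / real N < t" "t \<le> (real l + 1) / real N"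
proof -
  define l where "l = nat (\<lceil>t * real N\<rceil> - 1)"
  have tp: "0 < t * real N" using t Npos by simp
  have c1: "\<lceil>t * real N\<rceil> \<ge> 1" using tp by (simp add: le_ceiling_iff)
  then have li: "real l = real_of_int \<lceil>t * real N\<rceil> - 1" unfolding l_def by simp
  have "real_of_int \<lceil>t * real N\<rceil> - 1 < t * real N" "t * real N \<le> real_of_int \<lceil>t * real N\<rceil>"
    using ceiling_correct[of "t * real N"] by auto
  then have "real l < t * real N" "t * real N \<le> real l + 1" using li by auto
  then have "real l / real N < t" "t \<le> (real l + 1) / real N" using Npos
    by (simp_all add: divide_less_eq le_divide_eq)
  then show ?thesis using that by blast
qed

lemma init_fbm: "fbm (lat_init N \<mu>0)"
  unfolding lat_init_dmeas by (rule dmeas_fbm[OF finite_lat_x[OF N]])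

lemma sol_fbm: "fbm (sol t)"
  unfolding lat_sol_def Let_def
  using step_fbm[OF N] init_fbm by auto

lemma sol_mass:
  assumes t: "t \<in> {0..T}"
  shows "measure (sol t) UNIV \<le> Ms"
proof (cases "t = 0")
  case True
  have "sol t = grid 0" unfolding lat_sol_def using True by simp
  then show ?thesis using grid_ok[of 0] T by simp
next
  case False
  then have tp: "0 < t" using t by auto
  obtain l where l: "real l / real N < t" "t \<le> (real l + 1) / real N" using sol_ex[OF tp] .
  have lT: "real l / real N \<le> T + 1" using l t by auto
  have g: "good N \<rho>s (grid l)" and m: "measure (grid l) UNIV \<le> Ms" using grid_ok[OF lT] by auto
  have inv: "measure (grid l) UNIV \<le> (measure \<mu>0 UNIV + S0 * (real l / real N)) * exp ((Lp + Cb) * (real l / real N))"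
    using grid_inv[OF N mu0 r0] by blast
  have \<mu>: "fbm (grid l)" using good_fbm[OF g] .
  have \<tau>: "0 \<le> t - real l / real N" using l by simp
  have "measure (sol t) UNIV \<le> (t - real l / real N) * (S0 + Lp * measure (grid l) UNIV) + exp (Cb * (t - real l / real N)) * measure (grid l) UNIV"
    unfolding sol_eq[OF tp l] by (rule step_mass_le[OF N \<tau> \<mu>])
  also have "\<dots> \<le> (measure \<mu>0 UNIV + S0 * (real l / real N + (t - real l / real N))) * exp ((Lp + Cb) * (real l / real N + (t - real l / real N)))"
    by (rule mass_rec[OF \<tau> _ S0_nonneg Lp_nonneg Cb_nonneg _ _ inv]) auto
  also have "\<dots> \<le> Ms" using mass_le_Ms[of t] t by simp
  finally show ?thesis .
qed

end

context run
begin

lemma claim2: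
  assumes t: "t \<in> {0..T}"
  shows "bl_norm (V (sol t)) = bl_norm (sol t) \<and> bl_norm (sol t) \<le> Ms"
proof -
  have f: "fbm (sol t)" by (rule sol_fbm)
  have fV: "fbm (V (sol t))" using V[OF f] by auto
  have "bl_norm (V (sol t)) = bl_norm (sol t)"
    using bl_norm_eq[OF fV] bl_norm_eq[OF f] mass_V[OF f] by simp
  moreover have "bl_norm (sol t) \<le> Ms" using bl_norm_eq[OF f] sol_mass[OF t] by simp
  ultimately show ?thesis by blast
qed

lemma claim3:
  assumes l: "real l / real N \<le> T"
  shows "(\<Sum>(x,v)\<in>lat_x N \<times> lat_v N. mv N (V (grid l)) x v * (1 + norm v + (norm v)^2)) \<le> Ms * (1 + Bv + Bv^2)"
proof -
  have lT: "real l / real N \<le> T + 1" using l by simp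
  have g: "good N \<rho>s (grid l)" and m: "measure (grid l) UNIV \<le> Ms" using grid_ok[OF lT] by auto
  have "(\<Sum>(x,v)\<in>lat_x N \<times> lat_v N. mv N (V (grid l)) x v * (1 + norm v + (norm v)^2))
      \<le> measure (grid l) UNIV * (1 + Bv + Bv^2)"
    using moments[OF N g \<rho>s_nonneg] unfolding Bv_def .
  also have "\<dots> \<le> Ms * (1 + Bv + Bv^2)" using m Bv_nonneg by (intro mult_right_mono) auto
  finally show ?thesis .
qed

lemma piece:
  assumes \<psi>: "\<psi> \<in> BL1" and l: "real l / real N \<le> T"
    and t: "real l / real N \<le> t" "t \<le> (real l + 1) / real N"
  shows "integral\<^sup>L (sol t) \<psi> = integral\<^sup>L (lat_step N s V c (grid l) (t - real l / real N)) \<psi>"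
proof (cases "t = real l / real N")
  case False
  then have t1: "real l / real N < t" using t by simp
  have tp: "0 < t" using t1 by (smt (verit) divide_nonneg_nonneg of_nat_0_le_iff)
  show ?thesis using sol_eq[OF tp t1 t(2)] by simp
next
  case True
  have lT: "real l / real N \<le> T + 1" using l by simp
  have g: "good N \<rho>s (grid l)" using grid_ok[OF lT] by auto
  have cap: "integral\<^sup>L (lat_step N s V c (grid l) 0) \<psi> = integral\<^sup>L (grid l) \<psi>"
    using capture[OF N g \<rho>s_nonneg _ big(2) BL1_meas[OF \<psi>]] big(1) by simp
  have "sol t = grid l"
  proof (cases l)
    case 0
    then have "t = 0" using True by simp
    then show ?thesis unfolding lat_sol_def using 0 by simp
  next
    case (Suc k)
    have tp: "0 < t" using True Suc Npos by simp
    have k1: "real k / real N < t" using True Suc Npos by (simp add: divide_strict_right_mono)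
    have k2: "t \<le> (real k + 1) / real N" using True Suc by (simp add: add.commute)
    have "t - real k / real N = 1 / real N" using True Suc by (simp add: diff_divide_distrib[symmetric])
    then show ?thesis using sol_eq[OF tp k1 k2] Suc by simp
  qed
  then show ?thesis using cap True by simp
qed

lemma piece_lip:
  assumes \<psi>: "\<psi> \<in> BL1" and l: "real l / real N \<le> T + 1"
    and t1: "0 \<le> \<tau>1" "\<tau>1 \<le> 1 / real N" and t2: "0 \<le> \<tau>2" "\<tau>2 \<le> 1 / real N"
  shows "\<bar>integral\<^sup>L (lat_step N s V c (grid l) \<tau>1) \<psi> - integral\<^sup>L (lat_step N s V c (grid l) \<tau>2) \<psi>\<bar> \<le> K1 * \<bar>\<tau>1 - \<tau>2\<bar>"
proof -
  have g: "good N \<rho>s (grid l)" and m: "measure (grid l) UNIV \<le> Ms" using grid_ok[OF l] by auto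
  let ?m = "measure (grid l) UNIV"
  let ?X = "Cb * exp Cb + exp Cb * Bv"
  have X0: "?X \<ge> 0" using Cb_nonneg Bv_nonneg by simp
  have "\<bar>integral\<^sup>L (lat_step N s V c (grid l) \<tau>1) \<psi> - integral\<^sup>L (lat_step N s V c (grid l) \<tau>2) \<psi>\<bar>
     \<le> \<bar>\<tau>1 - \<tau>2\<bar> * ((S0 + Lp * ?m) + ?m * ?X)"
    using step_lip[OF N g \<rho>s_nonneg t1 t2 \<psi>] unfolding Bv_def .
  also have "\<dots> \<le> \<bar>\<tau>1 - \<tau>2\<bar> * K1"
  proof (rule mult_left_mono)
    have "Lp * ?m \<le> Lp * Ms" using m Lp_nonneg by (rule mult_left_mono)
    moreover have "?m * ?X \<le> Ms * ?X" using m X0 by (rule mult_right_mono)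
    ultimately show "(S0 + Lp * ?m) + ?m * ?X \<le> K1" unfolding K1_def by linarith
  qed simp
  finally show ?thesis by (simp add: mult.commute)
qed

lemma piece_lip2:
  assumes \<psi>: "\<psi> \<in> BL1" and l: "real l / real N \<le> T"
    and a: "real l / real N \<le> t" "t \<le> (real l + 1) / real N"
    and b: "real l / real N \<le> u" "u \<le> (real l + 1) / real N"
  shows "\<bar>integral\<^sup>L (sol t) \<psi> - integral\<^sup>L (sol u) \<psi>\<bar> \<le> K1 * \<bar>t - u\<bar>"
proof -
  have lT: "real l / real N \<le> T + 1" using l by simp
  have e: "(real l + 1) / real N - real l / real N = 1 / real N" by (simp add: diff_divide_distrib[symmetric])
  have "\<bar>integral\<^sup>L (sol t) \<psi> - integral\<^sup>L (sol u) \<psi>\<bar> \<le> K1 * \<bar>(t - real l / real N) - (u - real l / real N)\<bar>"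
    unfolding piece[OF \<psi> l a] piece[OF \<psi> l b]
    by (rule piece_lip[OF \<psi> lT]) (use a b e in auto)
  then show ?thesis by simp
qed

lemma F_lip_aux:
  assumes \<psi>: "\<psi> \<in> BL1"
  shows "\<forall>t u. 0 \<le> t \<longrightarrow> t \<le> u \<longrightarrow> u \<le> T \<longrightarrow> u \<le> real n / real N \<longrightarrow>
    \<bar>integral\<^sup>L (sol u) \<psi> - integral\<^sup>L (sol t) \<psi>\<bar> \<le> K1 * (u - t)"
proof (induction n)
  case 0
  show ?case
  proof (intro allI impI)
    fix t u assume tu: "0 \<le> t" "t \<le> u" "u \<le> T" "u \<le> real 0 / real N"
    then have "t = u" by simp
    then show "\<bar>integral\<^sup>L (sol u) \<psi> - integral\<^sup>L (sol t) \<psi>\<bar> \<le> K1 * (u - t)" by simp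
  qed
next
  case (Suc n)
  show ?case
  proof (intro allI impI)
    fix t u assume tu: "0 \<le> t" "t \<le> u" "u \<le> T" "u \<le> real (Suc n) / real N"
    show "\<bar>integral\<^sup>L (sol u) \<psi> - integral\<^sup>L (sol t) \<psi>\<bar> \<le> K1 * (u - t)"
    proof (cases "u \<le> real n / real N")
      case True
      then show ?thesis using Suc.IH tu by blast
    next
      case False
      then have un: "real n / real N < u" by simp
      have nT: "real n / real N \<le> T" using un tu by simp
      have u2: "u \<le> (real n + 1) / real N" using tu by (simp add: add.commute)
      show ?thesis
      proof (cases "real n / real N \<le> t")
        case True
        have "\<bar>integral\<^sup>L (sol u) \<psi> - integral\<^sup>L (sol t) \<psi>\<bar> \<le> K1 * \<bar>u - t\<bar>"
          by (rule piece_lip2[OF \<psi> nT]) (use True tu un u2 in auto)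
        then show ?thesis using tu by simp
      next
        case False
        let ?p = "real n / real N"
        have p0: "0 \<le> ?p" by simp
        have A: "\<bar>integral\<^sup>L (sol u) \<psi> - integral\<^sup>L (sol ?p) \<psi>\<bar> \<le> K1 * \<bar>u - ?p\<bar>"
          by (rule piece_lip2[OF \<psi> nT]) (use un u2 in \<open>auto simp: add_divide_distrib\<close>)
        have B: "\<bar>integral\<^sup>L (sol ?p) \<psi> - integral\<^sup>L (sol t) \<psi>\<bar> \<le> K1 * (?p - t)"
          using Suc.IH tu False nT by auto
        have "\<bar>integral\<^sup>L (sol u) \<psi> - integral\<^sup>L (sol t) \<psi>\<bar> \<le>
            \<bar>integral\<^sup>L (sol u) \<psi> - integral\<^sup>L (sol ?p) \<psi>\<bar> + \<bar>integral\<^sup>L (sol ?p) \<psi> - integral\<^sup>L (sol t) \<psi>\<bar>"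
          by linarith
        also have "\<dots> \<le> K1 * (u - ?p) + K1 * (?p - t)" using A B un by simp
        also have "\<dots> = K1 * (u - t)" by (simp add: algebra_simps)
        finally show ?thesis .
      qed
    qed
  qed
qed

lemma F_lip:
  assumes \<psi>: "\<psi> \<in> BL1" and t: "t \<in> {0..T}" and u: "u \<in> {0..T}"
  shows "\<bar>integral\<^sup>L (sol t) \<psi> - integral\<^sup>L (sol u) \<psi>\<bar> \<le> K1 * \<bar>t - u\<bar>"
proof -
  have gen: "\<bar>integral\<^sup>L (sol b) \<psi> - integral\<^sup>L (sol a) \<psi>\<bar> \<le> K1 * (b - a)"
    if ab: "a \<in> {0..T}" "b \<in> {0..T}" "a \<le> b" for a b
  proof -
    define n where "n = nat \<lceil>b * real N\<rceil>"
    have "b * real N \<le> real n" unfolding n_def by linarith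
    then have "b \<le> real n / real N" using Npos by (simp add: le_divide_eq)
    then show ?thesis using F_lip_aux[OF \<psi>, of n] ab by auto
  qed
  show ?thesis
  proof (cases "u \<le> t")
    case True
    then show ?thesis using gen[OF u t True] by simp
  next
    case False
    then show ?thesis using gen[OF t u] by (simp add: abs_minus_commute)
  qed
qed

lemma claim1:
  assumes t: "t \<in> {0..T}" and u: "u \<in> {0..T}"
  shows "bl_dist (sol t) (sol u) \<le> K1 * \<bar>t - u\<bar>"
proof (rule bl_dist_le)
  fix \<psi> :: "'a \<Rightarrow> real" assume "\<psi> \<in> BL1"
  then show "integral\<^sup>L (sol t) \<psi> - integral\<^sup>L (sol u) \<psi> \<le> K1 * \<bar>t - u\<bar>"
    using F_lip[of \<psi> t u] t u by simp
qed

end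

context run
begin

definition "Cd = K1 + Ms + Ms * (1 + Bv + Bv^2)"

lemma all_claims:
  "(\<forall>t\<in>{0..T}. \<forall>u\<in>{0..T}. bl_dist (sol t) (sol u) \<le> Cd * \<bar>t - u\<bar>)
   \<and> (\<forall>t\<in>{0..T}. bl_norm (V (sol t)) = bl_norm (sol t) \<and> bl_norm (sol t) \<le> Cd)
   \<and> (\<forall>l::nat. real l / real N \<le> T \<longrightarrow>
        (\<Sum>(x,v)\<in>lat_x N \<times> lat_v N. mv N (V (grid l)) x v * (1 + norm v + (norm v)^2)) \<le> Cd)"
proof (intro conjI ballI allI impI)
  have M0: "0 \<le> Ms * (1 + Bv + Bv^2)" using Ms_nonneg Bv_nonneg by simp
  fix t u assume t: "t \<in> {0..T}" and u: "u \<in> {0..T}"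
  have "K1 * \<bar>t - u\<bar> \<le> Cd * \<bar>t - u\<bar>"
    unfolding Cd_def using Ms_nonneg M0 by (intro mult_right_mono) auto
  then show "bl_dist (sol t) (sol u) \<le> Cd * \<bar>t - u\<bar>" using claim1[OF t u] by linarith
next
  have M0: "0 \<le> Ms * (1 + Bv + Bv^2)" using Ms_nonneg Bv_nonneg by simp
  fix t assume t: "t \<in> {0..T}"
  show "bl_norm (V (sol t)) = bl_norm (sol t)" using claim2[OF t] by blast
  show "bl_norm (sol t) \<le> Cd" using claim2[OF t] K1_nonneg M0 unfolding Cd_def by linarith
next
  fix l :: nat assume l: "real l / real N \<le> T"
  show "(\<Sum>(x,v)\<in>lat_x N \<times> lat_v N. mv N (V (grid l)) x v * (1 + norm v + (norm v)^2)) \<le> Cd"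
    using claim3[OF l] K1_nonneg Ms_nonneg unfolding Cd_def by linarith
qed

end

theorem lemma4p6:
  fixes V :: "'a::euclidean_space measure \<Rightarrow> ('a \<times> 'a) measure"
    and s :: "'a measure \<Rightarrow> 'a measure"
    and c :: "'a \<Rightarrow> 'a measure \<Rightarrow> real"
    and \<mu>0 :: "'a measure"
    and T C_S L R C_b C_L :: real
    and C_F :: "real \<Rightarrow> real"
  assumes T: "T > 0"
    and mu0: "fbm \<mu>0" "bounded (msupp \<mu>0)"
    and V: "\<And>\<mu>. fbm \<mu> \<Longrightarrow> fbm (V \<mu>) \<and> distr (V \<mu>) borel fst = \<mu>"
    and V1: "\<And>\<mu> r. fbm \<mu> \<Longrightarrow> (\<forall>p\<in>msupp (V \<mu>). norm (fst p) \<le> r) \<Longrightarrow>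
                 (\<forall>p\<in>msupp (V \<mu>). norm (snd p) \<le> C_S * (1 + r))"
    and V2: "\<And>R' \<mu> \<nu>. R' > 0 \<Longrightarrow> fbm \<mu> \<Longrightarrow> fbm \<nu> \<Longrightarrow> msupp \<mu> \<subseteq> ball 0 R' \<Longrightarrow>
                 msupp \<nu> \<subseteq> ball 0 R' \<Longrightarrow> bl_dist (V \<mu>) (V \<nu>) \<le> C_F R' * bl_dist \<mu> \<nu>"
    and S: "\<And>\<mu>. fbm \<mu> \<Longrightarrow> fbm (s \<mu>)"
    and S1: "\<And>\<mu> \<nu>. fbm \<mu> \<Longrightarrow> fbm \<nu> \<Longrightarrow> bl_dist (s \<mu>) (s \<nu>) \<le> L * bl_dist \<mu> \<nu>"
    and S2: "\<And>\<mu>. fbm \<mu> \<Longrightarrow> msupp (s \<mu>) \<subseteq> ball 0 R"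
    and C1: "\<And>x \<mu>. fbm \<mu> \<Longrightarrow> \<bar>c x \<mu>\<bar> \<le> C_b"
    and C2: "\<And>x y \<mu> \<nu>. fbm \<mu> \<Longrightarrow> fbm \<nu> \<Longrightarrow>
                 \<bar>c x \<mu> - c y \<nu>\<bar> \<le> C_L * (norm (x - y) + bl_dist \<mu> \<nu>)"
  shows "\<exists>C_d. \<exists>N0::nat. \<forall>N\<ge>N0. N \<ge> 1 \<longrightarrow>
     (\<forall>t\<in>{0..T}. \<forall>u\<in>{0..T}.
        bl_dist (lat_sol N s V c \<mu>0 t) (lat_sol N s V c \<mu>0 u) \<le> C_d * \<bar>t - u\<bar>)
   \<and> (\<forall>t\<in>{0..T}.
        bl_norm (V (lat_sol N s V c \<mu>0 t)) = bl_norm (lat_sol N s V c \<mu>0 t)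
      \<and> bl_norm (lat_sol N s V c \<mu>0 t) \<le> C_d)
   \<and> (\<forall>l::nat. real l / real N \<le> T \<longrightarrow>
        (\<Sum>(x,v)\<in>lat_x N \<times> lat_v N.
           mv N (V (lat_grid N s V c \<mu>0 l)) x v * (1 + norm v + (norm v)^2)) \<le> C_d)"
proof -
  have st: "setting V s c C_S L R C_b"
    by (unfold_locales) (use V V1 S S1 S2 C1 in auto)
  obtain r0 where r0: "r0 > 0" "\<forall>x\<in>msupp \<mu>0. norm x \<le> r0"
    using mu0(2) unfolding bounded_pos by blast
  have r0c: "msupp \<mu>0 \<subseteq> cball 0 r0" using r0(2) by auto
  define \<rho>0 where "\<rho>0 = (r0 + \<bar>R\<bar> + real DIM('a) + 1) * exp ((\<bar>C_S\<bar> + real DIM('a)) * (T + 1)) - 1"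
  define N0 where "N0 = nat \<lceil>\<rho>0 + \<bar>C_S\<bar> * (1 + \<rho>0)\<rceil> + 1"
  have \<rho>00: "\<rho>0 \<ge> 0"
  proof -
    have "1 \<le> exp ((\<bar>C_S\<bar> + real DIM('a)) * (T + 1))" using T by simp
    then have "1 * 1 \<le> (r0 + \<bar>R\<bar> + real DIM('a) + 1) * exp ((\<bar>C_S\<bar> + real DIM('a)) * (T + 1))"
      by (intro mult_mono) (use r0 in auto)
    then show ?thesis unfolding \<rho>0_def by simp
  qed
  have cs0: "\<bar>C_S\<bar> * (1 + \<rho>0) \<ge> 0" using \<rho>00 by simp
  show ?thesis
  proof (intro exI[of _ "run.Cd s C_S L R C_b \<mu>0 T r0"] exI[of _ N0] allI impI)
    fix N :: nat assume NN0: "N \<ge> N0" and N: "N \<ge> 1"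
    have "\<rho>0 + \<bar>C_S\<bar> * (1 + \<rho>0) < real N0" unfolding N0_def by linarith
    also have "\<dots> \<le> real N" using NN0 by simp
    finally have big: "\<rho>0 + \<bar>C_S\<bar> * (1 + \<rho>0) < real N" .
    interpret Run: run V s c C_S L R C_b \<mu>0 T r0 N
    proof (intro run.intro st run_axioms.intro)
      show "(r0 + \<bar>R\<bar> + real DIM('a) + 1) * exp ((\<bar>C_S\<bar> + real DIM('a)) * (T + 1)) - 1 < real N"
        using big cs0 unfolding \<rho>0_def by linarith
      show "\<bar>C_S\<bar> * (1 + ((r0 + \<bar>R\<bar> + real DIM('a) + 1) * exp ((\<bar>C_S\<bar> + real DIM('a)) * (T + 1)) - 1)) < real N"
        using big \<rho>00 unfolding \<rho>0_def by linarith
    qed (use T mu0 r0c r0 N in auto)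
    show "(\<forall>t\<in>{0..T}. \<forall>u\<in>{0..T}.
        bl_dist (lat_sol N s V c \<mu>0 t) (lat_sol N s V c \<mu>0 u) \<le> run.Cd s C_S L R C_b \<mu>0 T r0 * \<bar>t - u\<bar>)
   \<and> (\<forall>t\<in>{0..T}.
        bl_norm (V (lat_sol N s V c \<mu>0 t)) = bl_norm (lat_sol N s V c \<mu>0 t)
      \<and> bl_norm (lat_sol N s V c \<mu>0 t) \<le> run.Cd s C_S L R C_b \<mu>0 T r0)
   \<and> (\<forall>l::nat. real l / real N \<le> T \<longrightarrow>
        (\<Sum>(x,v)\<in>lat_x N \<times> lat_v N.
           mv N (V (lat_grid N s V c \<mu>0 l)) x v * (1 + norm v + (norm v)^2)) \<le> run.Cd s C_S L R C_b \<mu>0 T r0)"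
      by (rule Run.all_claims)
  qed
qed

end
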